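(* Let $\sigma>0$, $k>0$, $\alpha\geq 0$, $\lambda\in\mathbb{R}$, and consider the linear parabolic partial differential equation for $u=u(t,x)$, $x>0$, $$u_t=\tfrac12\sigma^2x^2u_{xx}+kx(\alpha-x)u_x+\lambda x^2u .$$ Suppose $\alpha=0$ and $\lambda=\frac{k^2}{2\sigma^2}$. Then the Lie algebra of infinitesimal (point) symmetries of this equation is spanned by the six vector fields $$V_1=\partial_t,$$ $$V_2=t\partial_t+\tfrac12 x\ln x\,\partial_x+\Big(\tfrac{k}{2\sigma^2}x\ln x+\tfrac14\ln x-\tfrac{\sigma^2}{8}t\Big)u\,\partial_u,$$ $$V_3=t^2\partial_t+tx\ln x\,\partial_x+\Big(\tfrac{k}{\sigma^2}tx\ln x-\tfrac{1}{2\sigma^2}\ln^2x+\tfrac12 t\ln x-\tfrac{\sigma^2}{8}t^2-\tfrac12 t\Big)u\,\partial_u,$$ $$V_4=x\partial_x+\tfrac{k}{\sigma^2}xu\,\partial_u,\qquad V_5=tx\partial_x+\Big(\tfrac{k}{\sigma^2}tx-\tfrac{1}{\sigma^2}\ln x+\tfrac12 t\Big)u\,\partial_u,\qquad V_6=u\partial_u,$$ together with the infinite-dimensional subalgebra of vector fields $V_\varphi=\varphi(t,x)\partial_u$, where $\varphi(t,x)$ is an arbitrary solution of the equation.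
   Context: An infinitesimal symmetry is a vector field $V=\tau(t,x,u)\partial_t+\xi(t,x,u)\partial_x+\phi(t,x,u)\partial_u$ generating a one-parameter group of transformations of $(t,x,u)$ that maps solutions of the equation to solutions; equivalently, the second prolongation of $V$ applied to $\tfrac12\sigma^2x^2u_{xx}+kx(\alpha-x)u_x+\lambda x^2u-u_t$ vanishes on solutions of the equation. *)

theory Defs
  imports "HOL-Analysis.Analysis"
begin

text \<open>Coefficient functions of vector fields on the (t,x,u)-space are
  curried functions real => real => real => real.  Partial derivatives:\<close>

definition pd_t :: "(real \<Rightarrow> real \<Rightarrow> real \<Rightarrow> real) \<Rightarrow> real \<Rightarrow> real \<Rightarrow> real \<Rightarrow> real" where
  "pd_t f = (\<lambda>t x u. deriv (\<lambda>s. f s x u) t)"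

definition pd_x :: "(real \<Rightarrow> real \<Rightarrow> real \<Rightarrow> real) \<Rightarrow> real \<Rightarrow> real \<Rightarrow> real \<Rightarrow> real" where
  "pd_x f = (\<lambda>t x u. deriv (\<lambda>s. f t s u) x)"

definition pd_u :: "(real \<Rightarrow> real \<Rightarrow> real \<Rightarrow> real) \<Rightarrow> real \<Rightarrow> real \<Rightarrow> real \<Rightarrow> real" where
  "pd_u f = (\<lambda>t x u. deriv (\<lambda>s. f t x s) u)"

inductive_set partials :: "(real \<Rightarrow> real \<Rightarrow> real \<Rightarrow> real) \<Rightarrow> (real \<Rightarrow> real \<Rightarrow> real \<Rightarrow> real) set"
  for f where
  self: "f \<in> partials f"
| dt: "g \<in> partials f \<Longrightarrow> pd_t g \<in> partials f"
| dx: "g \<in> partials f \<Longrightarrow> pd_x g \<in> partials f"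
| du: "g \<in> partials f \<Longrightarrow> pd_u g \<in> partials f"

definition smooth_on :: "(real \<times> real \<times> real) set \<Rightarrow> (real \<Rightarrow> real \<Rightarrow> real \<Rightarrow> real) \<Rightarrow> bool" where
  "smooth_on S f \<longleftrightarrow> (\<forall>g\<in>partials f. \<forall>p\<in>S. (\<lambda>(t, x, u). g t x u) differentiable (at p))"

definition dom_pos :: "(real \<times> real \<times> real) set" where
  "dom_pos = {(t, x, u). x > 0}"

definition E_eq :: "real \<Rightarrow> real \<Rightarrow> real \<Rightarrow> real \<Rightarrow> real \<Rightarrow> real \<Rightarrow> real \<Rightarrow> real \<Rightarrow> real \<Rightarrow> real" where
  "E_eq \<sigma> k \<alpha> lam x u ut ux uxx =
     1/2 * \<sigma>\<^sup>2 * x\<^sup>2 * uxx + k * x * (\<alpha> - x) * ux + lam * x\<^sup>2 * u - ut"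

definition is_solution :: "real \<Rightarrow> real \<Rightarrow> real \<Rightarrow> real \<Rightarrow> (real \<Rightarrow> real \<Rightarrow> real) \<Rightarrow> bool" where
  "is_solution \<sigma> k \<alpha> lam w \<longleftrightarrow>
     smooth_on dom_pos (\<lambda>t x u. w t x) \<and>
     (\<forall>t x. x > 0 \<longrightarrow>
        deriv (\<lambda>s. w s x) t =
          1/2 * \<sigma>\<^sup>2 * x\<^sup>2 * deriv (deriv (\<lambda>y. w t y)) x
          + k * x * (\<alpha> - x) * deriv (\<lambda>y. w t y) x + lam * x\<^sup>2 * w t x)"

text \<open>Second prolongation coefficients (standard formulas, cf. Olver) for
  V = tau d_t + xi d_x + phi d_u, evaluated at the jet point
  (t,x,u,u_t,u_x,u_xx,u_xt).\<close>
definition prol_t where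
  "prol_t \<tau> \<xi> \<phi> t x u ut ux =
     pd_t \<phi> t x u + (pd_u \<phi> t x u - pd_t \<tau> t x u) * ut - pd_t \<xi> t x u * ux
     - pd_u \<tau> t x u * ut\<^sup>2 - pd_u \<xi> t x u * ux * ut"

definition prol_x where
  "prol_x \<tau> \<xi> \<phi> t x u ut ux =
     pd_x \<phi> t x u + (pd_u \<phi> t x u - pd_x \<xi> t x u) * ux - pd_x \<tau> t x u * ut
     - pd_u \<xi> t x u * ux\<^sup>2 - pd_u \<tau> t x u * ux * ut"

definition prol_xx where
  "prol_xx \<tau> \<xi> \<phi> t x u ut ux uxx uxt =
     pd_x (pd_x \<phi>) t x u
     + (2 * pd_u (pd_x \<phi>) t x u - pd_x (pd_x \<xi>) t x u) * ux
     - pd_x (pd_x \<tau>) t x u * ut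
     + (pd_u (pd_u \<phi>) t x u - 2 * pd_u (pd_x \<xi>) t x u) * ux\<^sup>2
     - 2 * pd_u (pd_x \<tau>) t x u * ux * ut
     - pd_u (pd_u \<xi>) t x u * ux ^ 3
     - pd_u (pd_u \<tau>) t x u * ux\<^sup>2 * ut
     + (pd_u \<phi> t x u - 2 * pd_x \<xi> t x u) * uxx
     - 2 * pd_x \<tau> t x u * uxt
     - 3 * pd_u \<xi> t x u * ux * uxx
     - pd_u \<tau> t x u * ut * uxx
     - 2 * pd_u \<tau> t x u * ux * uxt"

text \<open>Infinitesimal symmetry: smooth coefficients on x > 0, and pr^(2) V applied to
  E vanishes at every jet point (with x > 0) lying on the equation E = 0.
  Partial derivatives of E: E_t = 0, E_x = sigma^2 x u_xx + k (alpha - 2x) u_x + 2 lambda x u,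
  E_u = lambda x^2, E_{u_x} = k x (alpha - x), E_{u_xx} = sigma^2 x^2 / 2, E_{u_t} = -1.\<close>
definition is_symmetry where
  "is_symmetry \<sigma> k \<alpha> lam \<tau> \<xi> \<phi> \<longleftrightarrow>
     smooth_on dom_pos \<tau> \<and> smooth_on dom_pos \<xi> \<and> smooth_on dom_pos \<phi> \<and>
     (\<forall>t x u ut ux uxx uxt. x > 0 \<longrightarrow> E_eq \<sigma> k \<alpha> lam x u ut ux uxx = 0 \<longrightarrow>
        \<xi> t x u * (\<sigma>\<^sup>2 * x * uxx + k * (\<alpha> - 2 * x) * ux + 2 * lam * x * u)
        + \<phi> t x u * (lam * x\<^sup>2)
        + prol_x \<tau> \<xi> \<phi> t x u ut ux * (k * x * (\<alpha> - x))
        + prol_xx \<tau> \<xi> \<phi> t x u ut ux uxx uxt * (1/2 * \<sigma>\<^sup>2 * x\<^sup>2)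
        - prol_t \<tau> \<xi> \<phi> t x u ut ux = 0)"

end

theory Submission
  imports Defs
begin

lemma deriv_local:
  fixes f g :: "real \<Rightarrow> real"
  assumes "0 < x" "\<And>y. 0 < y \<Longrightarrow> f y = g y"
  shows "deriv f x = deriv g x"
proof -
  have "\<And>D. (f has_field_derivative D) (at x) \<longleftrightarrow> (g has_field_derivative D) (at x)"
  proof
    fix D assume "(f has_field_derivative D) (at x)"
    then show "(g has_field_derivative D) (at x)"
      by (rule has_field_derivative_transform_within_open[where S="{0<..}"]) (use assms in auto)
  next
    fix D assume "(g has_field_derivative D) (at x)"
    then show "(f has_field_derivative D) (at x)"
      by (rule has_field_derivative_transform_within_open[where S="{0<..}"]) (use assms in auto)
  qed
  then show ?thesis unfolding deriv_def by simp
qed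

lemma sm_diff:
  assumes "smooth_on dom_pos f" "g \<in> partials f" "0 < x"
  shows "(\<lambda>(t,x,u). g t x u) differentiable (at (t,x,u))"
  using assms unfolding smooth_on_def dom_pos_def by auto


lemma gline_t:
  assumes "(\<lambda>(t,x,u). g t x u) differentiable (at (t,x,u))"
  shows "((\<lambda>s. g s x u) has_real_derivative pd_t g t x u) (at t)"
proof -
  have d: "(\<lambda>(t,x,u). g t x u) differentiable (at ((\<lambda>s. (s,x,u)) t))"
    using assms by simp
  have "((\<lambda>s. (s,x,u)) has_derivative (\<lambda>h. (h,0,0))) (at t)"
    by (auto intro!: derivative_eq_intros simp: zero_prod_def)
  then have "(\<lambda>s. (s,x,u)) differentiable (at t)" by (rule differentiableI)
  from differentiable_chain_at[OF this d]
  have "(\<lambda>s. g s x u) differentiable (at t)" by (simp add: o_def)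
  then show ?thesis unfolding pd_t_def using DERIV_deriv_iff_real_differentiable by blast
qed

lemma gline_x:
  assumes "(\<lambda>(t,x,u). g t x u) differentiable (at (t,x,u))"
  shows "((\<lambda>s. g t s u) has_real_derivative pd_x g t x u) (at x)"
proof -
  have d: "(\<lambda>(t,x,u). g t x u) differentiable (at ((\<lambda>s. (t,s,u)) x))"
    using assms by simp
  have "((\<lambda>s. (t,s,u)) has_derivative (\<lambda>h. (0,h,0))) (at x)"
    by (auto intro!: derivative_eq_intros simp: zero_prod_def)
  then have "(\<lambda>s. (t,s,u)) differentiable (at x)" by (rule differentiableI)
  from differentiable_chain_at[OF this d]
  have "(\<lambda>s. g t s u) differentiable (at x)" by (simp add: o_def)
  then show ?thesis unfolding pd_x_def using DERIV_deriv_iff_real_differentiable by blast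
qed

lemma gline_u:
  assumes "(\<lambda>(t,x,u). g t x u) differentiable (at (t,x,u))"
  shows "((\<lambda>s. g t x s) has_real_derivative pd_u g t x u) (at u)"
proof -
  have d: "(\<lambda>(t,x,u). g t x u) differentiable (at ((\<lambda>s. (t,x,s)) u))"
    using assms by simp
  have "((\<lambda>s. (t,x,s)) has_derivative (\<lambda>h. (0,0,h))) (at u)"
    by (auto intro!: derivative_eq_intros simp: zero_prod_def)
  then have "(\<lambda>s. (t,x,s)) differentiable (at u)" by (rule differentiableI)
  from differentiable_chain_at[OF this d]
  have "(\<lambda>s. g t x s) differentiable (at u)" by (simp add: o_def)
  then show ?thesis unfolding pd_u_def using DERIV_deriv_iff_real_differentiable by blast
qed

lemma line_t:
  assumes "smooth_on dom_pos f" "g \<in> partials f" "0 < x"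
  shows "((\<lambda>s. g s x u) has_real_derivative pd_t g t x u) (at t)"
  by (rule gline_t[OF sm_diff[OF assms]])

lemma line_x:
  assumes "smooth_on dom_pos f" "g \<in> partials f" "0 < x"
  shows "((\<lambda>s. g t s u) has_real_derivative pd_x g t x u) (at x)"
  by (rule gline_x[OF sm_diff[OF assms]])

lemma line_u:
  assumes "smooth_on dom_pos f" "g \<in> partials f" "0 < x"
  shows "((\<lambda>s. g t x s) has_real_derivative pd_u g t x u) (at u)"
  by (rule gline_u[OF sm_diff[OF assms]])

lemma const_pos:
  fixes f :: "real \<Rightarrow> real"
  assumes "\<And>y. 0 < y \<Longrightarrow> (f has_real_derivative 0) (at y)" "0 < x" "0 < y"
  shows "f x = f y"
proof -
  have "f x = f y" if "0 < x" "x \<le> y" for x y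
  proof (cases "x = y")
    case False
    then have "x < y" using that by simp
    show ?thesis
      by (rule DERIV_isconst3[of "x/2" "y+1"]) (use that assms in auto)
  qed simp
  then show ?thesis using assms by (metis linear)
qed

lemma const_all:
  fixes f :: "real \<Rightarrow> real"
  assumes "\<And>y. (f has_real_derivative 0) (at y)"
  shows "f x = f y"
  using DERIV_isconst_all assms by blast

definition jet where
  "jet \<sigma> k \<alpha> lam \<tau> \<xi> \<phi> t x u ux uxx uxt =
    (let ut = 1/2 * \<sigma>\<^sup>2 * x\<^sup>2 * uxx + k * x * (\<alpha> - x) * ux + lam * x\<^sup>2 * u in
        \<xi> t x u * (\<sigma>\<^sup>2 * x * uxx + k * (\<alpha> - 2 * x) * ux + 2 * lam * x * u)
        + \<phi> t x u * (lam * x\<^sup>2)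
        + prol_x \<tau> \<xi> \<phi> t x u ut ux * (k * x * (\<alpha> - x))
        + prol_xx \<tau> \<xi> \<phi> t x u ut ux uxx uxt * (1/2 * \<sigma>\<^sup>2 * x\<^sup>2)
        - prol_t \<tau> \<xi> \<phi> t x u ut ux)"

lemma jet_uxt:
  "jet \<sigma> k \<alpha> lam \<tau> \<xi> \<phi> t x u ux uxx 1 - jet \<sigma> k \<alpha> lam \<tau> \<xi> \<phi> t x u ux uxx 0
   = - \<sigma>\<^sup>2 * x\<^sup>2 * (pd_x \<tau> t x u + pd_u \<tau> t x u * ux)"
  unfolding jet_def prol_x_def prol_xx_def prol_t_def Let_def
  by (simp add: algebra_simps)

lemma jet_mixed:
  assumes "pd_x \<tau> t x u = 0" "pd_u \<tau> t x u = 0" "pd_x (pd_x \<tau>) t x u = 0"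
    "pd_u (pd_x \<tau>) t x u = 0" "pd_u (pd_u \<tau>) t x u = 0"
  shows "jet \<sigma> k \<alpha> lam \<tau> \<xi> \<phi> t x u 1 1 0 - jet \<sigma> k \<alpha> lam \<tau> \<xi> \<phi> t x u 1 0 0
     - jet \<sigma> k \<alpha> lam \<tau> \<xi> \<phi> t x u 0 1 0 + jet \<sigma> k \<alpha> lam \<tau> \<xi> \<phi> t x u 0 0 0
   = - \<sigma>\<^sup>2 * x\<^sup>2 * pd_u \<xi> t x u"
  unfolding jet_def prol_x_def prol_xx_def prol_t_def Let_def assms
  by (simp add: algebra_simps power2_eq_square)

lemma jet_sq:
  assumes "pd_x \<tau> t x u = 0" "pd_u \<tau> t x u = 0" "pd_x (pd_x \<tau>) t x u = 0"
    "pd_u (pd_x \<tau>) t x u = 0" "pd_u (pd_u \<tau>) t x u = 0"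
    "pd_u \<xi> t x u = 0" "pd_u (pd_u \<xi>) t x u = 0" "pd_u (pd_x \<xi>) t x u = 0"
  shows "jet \<sigma> k \<alpha> lam \<tau> \<xi> \<phi> t x u 1 0 0 + jet \<sigma> k \<alpha> lam \<tau> \<xi> \<phi> t x u (-1) 0 0
     - 2 * jet \<sigma> k \<alpha> lam \<tau> \<xi> \<phi> t x u 0 0 0
   = \<sigma>\<^sup>2 * x\<^sup>2 * pd_u (pd_u \<phi>) t x u"
  unfolding jet_def prol_x_def prol_xx_def prol_t_def Let_def assms
  by (simp add: algebra_simps power2_eq_square)

lemma jet_uxx:
  assumes "pd_x \<tau> t x u = 0" "pd_u \<tau> t x u = 0" "pd_x (pd_x \<tau>) t x u = 0"
    "pd_u (pd_x \<tau>) t x u = 0" "pd_u (pd_u \<tau>) t x u = 0"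
    "pd_u \<xi> t x u = 0" "pd_u (pd_u \<xi>) t x u = 0" "pd_u (pd_x \<xi>) t x u = 0"
  shows "jet \<sigma> k \<alpha> lam \<tau> \<xi> \<phi> t x u 0 1 0 - jet \<sigma> k \<alpha> lam \<tau> \<xi> \<phi> t x u 0 0 0
   = \<sigma>\<^sup>2 * x * \<xi> t x u - \<sigma>\<^sup>2 * x\<^sup>2 * pd_x \<xi> t x u + pd_t \<tau> t x u * \<sigma>\<^sup>2 * x\<^sup>2 / 2"
  unfolding jet_def prol_x_def prol_xx_def prol_t_def Let_def assms
  by (simp add: field_simps power2_eq_square)

lemma jet_ux:
  assumes "pd_x \<tau> t x u = 0" "pd_u \<tau> t x u = 0" "pd_x (pd_x \<tau>) t x u = 0"
    "pd_u (pd_x \<tau>) t x u = 0" "pd_u (pd_u \<tau>) t x u = 0"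
    "pd_u \<xi> t x u = 0" "pd_u (pd_u \<xi>) t x u = 0" "pd_u (pd_x \<xi>) t x u = 0"
  shows "jet \<sigma> k \<alpha> lam \<tau> \<xi> \<phi> t x u 1 0 0 - jet \<sigma> k \<alpha> lam \<tau> \<xi> \<phi> t x u (-1) 0 0
   = 2 * (\<xi> t x u * k * (\<alpha> - 2 * x) + (pd_t \<tau> t x u - pd_x \<xi> t x u) * k * x * (\<alpha> - x)
       + \<sigma>\<^sup>2 * x\<^sup>2 / 2 * (2 * pd_u (pd_x \<phi>) t x u - pd_x (pd_x \<xi>) t x u) + pd_t \<xi> t x u)"
  unfolding jet_def prol_x_def prol_xx_def prol_t_def Let_def assms
  by (simp add: algebra_simps power2_eq_square)

lemma jet_0:
  assumes "pd_x \<tau> t x u = 0" "pd_u \<tau> t x u = 0" "pd_x (pd_x \<tau>) t x u = 0"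
  shows "jet \<sigma> k \<alpha> lam \<tau> \<xi> \<phi> t x u 0 0 0
   = \<xi> t x u * 2 * lam * x * u + \<phi> t x u * lam * x\<^sup>2 + pd_x \<phi> t x u * k * x * (\<alpha> - x)
     + \<sigma>\<^sup>2 * x\<^sup>2 / 2 * pd_x (pd_x \<phi>) t x u - pd_t \<phi> t x u
     - (pd_u \<phi> t x u - pd_t \<tau> t x u) * lam * x\<^sup>2 * u"
  unfolding jet_def prol_x_def prol_xx_def prol_t_def Let_def assms
  by (simp add: algebra_simps power2_eq_square)

lemma pdx_app: "pd_x f t x u = deriv (\<lambda>s. f t s u) x" by (simp add: pd_x_def)
lemma pdt_app: "pd_t f t x u = deriv (\<lambda>s. f s x u) t" by (simp add: pd_t_def)
lemma pdu_app: "pd_u f t x u = deriv (\<lambda>s. f t x s) u" by (simp add: pd_u_def)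

locale fwd =
  fixes \<sigma> k lam :: real and \<tau> \<xi> \<phi> :: "real \<Rightarrow> real \<Rightarrow> real \<Rightarrow> real"
  assumes sp: "\<sigma> > 0" and kp: "k > 0" and lamd: "lam = k\<^sup>2 / (2 * \<sigma>\<^sup>2)"
    and smT: "smooth_on dom_pos \<tau>" and smX: "smooth_on dom_pos \<xi>" and smP: "smooth_on dom_pos \<phi>"
    and HJ: "\<And>t x u ux uxx uxt. 0 < x \<Longrightarrow> jet \<sigma> k 0 lam \<tau> \<xi> \<phi> t x u ux uxx uxt = 0"
begin

lemma tau_x: assumes "0 < x" shows "pd_x \<tau> t x u = 0"
proof -
  have "- \<sigma>\<^sup>2 * x\<^sup>2 * (pd_x \<tau> t x u + pd_u \<tau> t x u * 0) = 0"
    using jet_uxt[of \<sigma> k 0 lam \<tau> \<xi> \<phi> t x u 0 0] HJ[OF assms] by simp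
  then show ?thesis using sp assms by simp
qed

lemma tau_u: assumes "0 < x" shows "pd_u \<tau> t x u = 0"
proof -
  have "- \<sigma>\<^sup>2 * x\<^sup>2 * (pd_x \<tau> t x u + pd_u \<tau> t x u * 1) = 0"
    using jet_uxt[of \<sigma> k 0 lam \<tau> \<xi> \<phi> t x u 1 0] HJ[OF assms] by simp
  then show ?thesis using sp assms tau_x[OF assms] by simp
qed

lemma tau_indep: assumes "0 < x" shows "\<tau> t x u = \<tau> t 1 0"
proof -
  have "\<tau> t x u = \<tau> t x 0"
    by (rule const_all[where f="\<lambda>s. \<tau> t x s"])
       (metis line_u[OF smT partials.self assms] tau_u[OF assms])
  also have "\<dots> = \<tau> t 1 0"
    by (rule const_pos[where f="\<lambda>s. \<tau> t s 0"])
       (use line_x[OF smT partials.self] tau_x assms in auto)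
  finally show ?thesis .
qed

lemma tau_xx: assumes "0 < x" shows "pd_x (pd_x \<tau>) t x u = 0"
proof -
  have "pd_x (pd_x \<tau>) t x u = deriv (\<lambda>s. pd_x \<tau> t s u) x" by (rule pdx_app)
  also have "\<dots> = deriv (\<lambda>s. 0) x" by (rule deriv_local) (use assms tau_x in auto)
  finally show ?thesis by simp
qed

lemma tau_ux: assumes "0 < x" shows "pd_u (pd_x \<tau>) t x u = 0"
proof -
  have "pd_u (pd_x \<tau>) t x u = deriv (\<lambda>s. pd_x \<tau> t x s) u" by (rule pdu_app)
  also have "(\<lambda>s. pd_x \<tau> t x s) = (\<lambda>s. 0)" using tau_x[OF assms] by auto
  finally show ?thesis by simp
qed

lemma tau_uu: assumes "0 < x" shows "pd_u (pd_u \<tau>) t x u = 0"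
proof -
  have "pd_u (pd_u \<tau>) t x u = deriv (\<lambda>s. pd_u \<tau> t x s) u" by (rule pdu_app)
  also have "(\<lambda>s. pd_u \<tau> t x s) = (\<lambda>s. 0)" using tau_u[OF assms] by auto
  finally show ?thesis by simp
qed

lemma tau_t: assumes "0 < x" shows "pd_t \<tau> t x u = pd_t \<tau> t 1 0"
proof -
  have "pd_t \<tau> t x u = deriv (\<lambda>s. \<tau> s x u) t" by (rule pdt_app)
  also have "(\<lambda>s. \<tau> s x u) = (\<lambda>s. \<tau> s 1 0)" using tau_indep[OF assms] by auto
  finally show ?thesis by (simp add: pdt_app)
qed

lemmas tauz = tau_x tau_u tau_xx tau_ux tau_uu

lemma xi_u: assumes "0 < x" shows "pd_u \<xi> t x u = 0"
proof -
  have "- \<sigma>\<^sup>2 * x\<^sup>2 * pd_u \<xi> t x u = 0"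
    using jet_mixed[of \<tau> t x u \<sigma> k 0 lam \<xi> \<phi>] HJ[OF assms] tauz[OF assms] by simp
  then show ?thesis using sp assms by simp
qed

lemma xi_indep: assumes "0 < x" shows "\<xi> t x u = \<xi> t x 0"
  by (rule const_all[where f="\<lambda>s. \<xi> t x s"])
     (metis line_u[OF smX partials.self assms] xi_u[OF assms])

lemma xi_uu: assumes "0 < x" shows "pd_u (pd_u \<xi>) t x u = 0"
proof -
  have "pd_u (pd_u \<xi>) t x u = deriv (\<lambda>s. pd_u \<xi> t x s) u" by (rule pdu_app)
  also have "(\<lambda>s. pd_u \<xi> t x s) = (\<lambda>s. 0)" using xi_u[OF assms] by auto
  finally show ?thesis by simp
qed

lemma xi_x_indep: assumes "0 < x" shows "pd_x \<xi> t x u = pd_x \<xi> t x 0"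
proof -
  have "pd_x \<xi> t x u = deriv (\<lambda>y. \<xi> t y u) x" by (rule pdx_app)
  also have "\<dots> = deriv (\<lambda>y. \<xi> t y 0) x" by (rule deriv_local) (use assms xi_indep in blast)+
  finally show ?thesis by (simp add: pdx_app)
qed

lemma xi_ux: assumes "0 < x" shows "pd_u (pd_x \<xi>) t x u = 0"
proof -
  have "pd_u (pd_x \<xi>) t x u = deriv (\<lambda>s. pd_x \<xi> t x s) u" by (rule pdu_app)
  also have "(\<lambda>s. pd_x \<xi> t x s) = (\<lambda>s. pd_x \<xi> t x 0)" using xi_x_indep[OF assms] by auto
  finally show ?thesis by simp
qed

lemmas xiz = xi_u xi_uu xi_ux

lemma phi_uu: assumes "0 < x" shows "pd_u (pd_u \<phi>) t x u = 0"
proof -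
  have "\<sigma>\<^sup>2 * x\<^sup>2 * pd_u (pd_u \<phi>) t x u = 0"
    using jet_sq[of \<tau> t x u \<xi> \<sigma> k 0 lam \<phi>] HJ[OF assms] tauz[OF assms] xiz[OF assms] by simp
  then show ?thesis using sp assms by simp
qed

lemma eq_d: assumes "0 < x"
  shows "\<sigma>\<^sup>2 * x * \<xi> t x u - \<sigma>\<^sup>2 * x\<^sup>2 * pd_x \<xi> t x u + pd_t \<tau> t x u * \<sigma>\<^sup>2 * x\<^sup>2 / 2 = 0"
  using jet_uxx[of \<tau> t x u \<xi> \<sigma> k 0 lam \<phi>] HJ[OF assms] tauz[OF assms] xiz[OF assms] by simp

lemma eq_e: assumes "0 < x"
  shows "\<xi> t x u * k * (0 - 2 * x) + (pd_t \<tau> t x u - pd_x \<xi> t x u) * k * x * (0 - x)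
       + \<sigma>\<^sup>2 * x\<^sup>2 / 2 * (2 * pd_u (pd_x \<phi>) t x u - pd_x (pd_x \<xi>) t x u) + pd_t \<xi> t x u = 0"
  using jet_ux[of \<tau> t x u \<xi> \<sigma> k 0 lam \<phi>] HJ[OF assms] tauz[OF assms] xiz[OF assms] by simp

lemma eq_f: assumes "0 < x"
  shows "\<xi> t x u * 2 * lam * x * u + \<phi> t x u * lam * x\<^sup>2 + pd_x \<phi> t x u * k * x * (0 - x)
     + \<sigma>\<^sup>2 * x\<^sup>2 / 2 * pd_x (pd_x \<phi>) t x u - pd_t \<phi> t x u
     - (pd_u \<phi> t x u - pd_t \<tau> t x u) * lam * x\<^sup>2 * u = 0"
  using jet_0[of \<tau> t x u \<sigma> k 0 lam \<xi> \<phi>] HJ[OF assms] tauz[OF assms] by simp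

end

context fwd begin

definition "T1 s = pd_t \<tau> s 1 0"
definition "T2 s = pd_t (pd_t \<tau>) s 1 0"
definition "T3 s = pd_t (pd_t (pd_t \<tau>)) s 1 0"
definition "b0 s = \<xi> s 1 0"
definition "b1 s = pd_t \<xi> s 1 0"
definition "b2 s = pd_t (pd_t \<xi>) s 1 0"

lemma dT0: "((\<lambda>s. \<tau> s 1 0) has_real_derivative T1 t) (at t)"
  unfolding T1_def by (rule line_t[OF smT partials.self]) simp
lemma dT1: "(T1 has_real_derivative T2 t) (at t)"
  unfolding T1_def T2_def by (rule line_t[OF smT partials.dt[OF partials.self]]) simp
lemma dT2: "(T2 has_real_derivative T3 t) (at t)"
  unfolding T2_def T3_def by (rule line_t[OF smT partials.dt[OF partials.dt[OF partials.self]]]) simp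
lemma db0: "(b0 has_real_derivative b1 t) (at t)"
  unfolding b0_def b1_def by (rule line_t[OF smX partials.self]) simp
lemma db1: "(b1 has_real_derivative b2 t) (at t)"
  unfolding b1_def b2_def by (rule line_t[OF smX partials.dt[OF partials.self]]) simp

lemma tau_t': "0 < x \<Longrightarrow> pd_t \<tau> t x u = T1 t"
  using tau_t unfolding T1_def by blast

lemma xi_closed0: assumes "0 < x" shows "\<xi> t x 0 = T1 t / 2 * x * ln x + b0 t * x"
proof -
  define h where "h y = \<xi> t y 0 / y - T1 t / 2 * ln y" for y
  have hd: "(h has_real_derivative 0) (at y)" if y: "0 < y" for y
  proof -
    have "(h has_real_derivative ((pd_x \<xi> t y 0 * y - \<xi> t y 0 * 1) / (y * y) - T1 t / 2 * (1 / y))) (at y)"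
      unfolding h_def using y
      by (auto intro!: derivative_eq_intros line_x[OF smX partials.self y])
    moreover have "(pd_x \<xi> t y 0 * y - \<xi> t y 0 * 1) / (y * y) - T1 t / 2 * (1 / y) = 0"
    proof -
      have "\<sigma>\<^sup>2 * y * \<xi> t y 0 - \<sigma>\<^sup>2 * y\<^sup>2 * pd_x \<xi> t y 0 + T1 t * \<sigma>\<^sup>2 * y\<^sup>2 / 2 = 0"
        using eq_d[OF y, of t 0] tau_t'[OF y] by simp
      then have "\<sigma>\<^sup>2 * y * (\<xi> t y 0 - y * pd_x \<xi> t y 0 + T1 t * y / 2) = 0"
        by (simp add: algebra_simps power2_eq_square)
      then have "\<xi> t y 0 - y * pd_x \<xi> t y 0 + T1 t * y / 2 = 0" using sp y by simp
      then have e: "pd_x \<xi> t y 0 = (\<xi> t y 0 + T1 t * y / 2) / y" using y by (simp add: field_simps)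
      show ?thesis using y by (simp add: e field_simps)
    qed
    ultimately show ?thesis by simp
  qed
  have "h x = h 1" by (rule const_pos[OF hd]) (use assms in auto)
  then have "\<xi> t x 0 / x - T1 t / 2 * ln x = b0 t" unfolding h_def b0_def by simp
  then show ?thesis using assms by (simp add: field_simps)
qed

lemma xi_closed: "0 < x \<Longrightarrow> \<xi> t x u = T1 t / 2 * x * ln x + b0 t * x"
  using xi_indep xi_closed0 by metis

lemma xi_x: assumes "0 < x" shows "pd_x \<xi> t x u = T1 t / 2 * (ln x + 1) + b0 t"
proof -
  have "pd_x \<xi> t x u = deriv (\<lambda>y. \<xi> t y u) x" by (rule pdx_app)
  also have "\<dots> = deriv (\<lambda>y. T1 t / 2 * y * ln y + b0 t * y) x"
    by (rule deriv_local) (use assms xi_closed in blast)+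
  also have "\<dots> = T1 t / 2 * (ln x + 1) + b0 t"
    by (rule DERIV_imp_deriv) (rule derivative_eq_intros refl | use assms in \<open>simp add: field_simps\<close>)+
  finally show ?thesis .
qed

lemma xi_xx: assumes "0 < x" shows "pd_x (pd_x \<xi>) t x u = T1 t / (2 * x)"
proof -
  have "pd_x (pd_x \<xi>) t x u = deriv (\<lambda>y. pd_x \<xi> t y u) x" by (rule pdx_app)
  also have "\<dots> = deriv (\<lambda>y. T1 t / 2 * (ln y + 1) + b0 t) x"
    by (rule deriv_local) (use assms xi_x in blast)+
  also have "\<dots> = T1 t / (2 * x)"
    by (rule DERIV_imp_deriv) (rule derivative_eq_intros refl | use assms in \<open>simp add: field_simps\<close>)+
  finally show ?thesis .
qed

lemma xi_t: assumes "0 < x" shows "pd_t \<xi> t x u = T2 t / 2 * x * ln x + b1 t * x"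
proof -
  have "pd_t \<xi> t x u = deriv (\<lambda>s. \<xi> s x u) t" by (rule pdt_app)
  also have "(\<lambda>s. \<xi> s x u) = (\<lambda>s. T1 s / 2 * x * ln x + b0 s * x)"
    using xi_closed[OF assms] by blast
  also have "deriv \<dots> t = T2 t / 2 * x * ln x + b1 t * x"
    by (rule DERIV_imp_deriv) (rule derivative_eq_intros refl dT1 db0 | simp)+
  finally show ?thesis .
qed


definition "Fc t x = T1 t / 4 * ln x + k * T1 t / (2 * \<sigma>\<^sup>2) * x * ln x + k * b0 t * x / \<sigma>\<^sup>2
   - T2 t / (4 * \<sigma>\<^sup>2) * (ln x)\<^sup>2 - b1 t / \<sigma>\<^sup>2 * ln x"
definition "Fxc t x = T1 t / (4 * x) + k * T1 t / (2 * \<sigma>\<^sup>2) * (ln x + 1) + k * b0 t / \<sigma>\<^sup>2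
   - T2 t / (2 * \<sigma>\<^sup>2) * ln x / x - b1 t / (\<sigma>\<^sup>2 * x)"
definition "Fxxc t x = - T1 t / (4 * x\<^sup>2) + k * T1 t / (2 * \<sigma>\<^sup>2 * x)
   - T2 t / (2 * \<sigma>\<^sup>2) * (1 - ln x) / x\<^sup>2 + b1 t / (\<sigma>\<^sup>2 * x\<^sup>2)"
definition "Fct t x = T2 t / 4 * ln x + k * T2 t / (2 * \<sigma>\<^sup>2) * x * ln x + k * b1 t * x / \<sigma>\<^sup>2
   - T3 t / (4 * \<sigma>\<^sup>2) * (ln x)\<^sup>2 - b2 t / \<sigma>\<^sup>2 * ln x"
definition "g0 t = pd_u \<phi> t 1 0 - k * b0 t / \<sigma>\<^sup>2"
definition "m1 t = pd_t (pd_u \<phi>) t 1 0"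

lemma dg0: "(g0 has_real_derivative (m1 t - k * b1 t / \<sigma>\<^sup>2)) (at t)"
proof -
  have d: "((\<lambda>s. pd_u \<phi> s 1 0) has_real_derivative m1 t) (at t)"
    unfolding m1_def by (rule line_t[OF smP partials.du[OF partials.self]]) simp
  show ?thesis unfolding g0_def[abs_def] using sp
    by (auto intro!: derivative_eq_intros d db0 simp: field_simps power2_eq_square)
qed

lemma dFc: assumes "0 < y" shows "((\<lambda>y. Fc t y) has_real_derivative Fxc t y) (at y)"
  unfolding Fc_def Fxc_def using assms sp
  by (auto intro!: derivative_eq_intros simp: field_simps power2_eq_square)

lemma dFxc: assumes "0 < y" shows "((\<lambda>y. Fxc t y) has_real_derivative Fxxc t y) (at y)"
  unfolding Fxxc_def Fxc_def using assms sp
  by (auto intro!: derivative_eq_intros simp: field_simps power2_eq_square)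

lemma dFct: "((\<lambda>s. Fc s x) has_real_derivative Fct t x) (at t)"
  unfolding Fc_def Fct_def using sp
  by (auto intro!: derivative_eq_intros dT1 dT2 db0 db1 simp: field_simps power2_eq_square)

lemma phi_u_indep: assumes "0 < x" shows "pd_u \<phi> t x u = pd_u \<phi> t x 0"
  by (rule const_all[where f="\<lambda>s. pd_u \<phi> t x s"])
     (metis line_u[OF smP partials.du[OF partials.self] assms] phi_uu[OF assms])

lemma phi_aff: assumes "0 < x" shows "\<phi> t x u = \<phi> t x 0 + u * pd_u \<phi> t x 0"
proof -
  have d: "((\<lambda>s. \<phi> t x s - s * pd_u \<phi> t x 0) has_real_derivative 0) (at y)" for y
  proof -
    have "((\<lambda>s. \<phi> t x s - s * pd_u \<phi> t x 0) has_real_derivative (pd_u \<phi> t x y - (1 * pd_u \<phi> t x 0 + 0 * y))) (at y)"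
      by (rule derivative_eq_intros line_u[OF smP partials.self assms] refl)+
    then show ?thesis using phi_u_indep[OF assms, of t y] by simp
  qed
  have "\<phi> t x u - u * pd_u \<phi> t x 0 = \<phi> t x 0 - 0 * pd_u \<phi> t x 0"
    using const_all[OF d, of u 0] by simp
  then show ?thesis by simp
qed

lemma Fm_diff: "0 < x \<Longrightarrow> pd_u \<phi> t x 0 = \<phi> t x 1 - \<phi> t x 0"
  using phi_aff[of x t 1] by simp

lemma phi_x_aff: assumes "0 < x"
  shows "pd_x \<phi> t x u = pd_x \<phi> t x 0 + u * (pd_x \<phi> t x 1 - pd_x \<phi> t x 0)"
proof -
  have "pd_x \<phi> t x u = deriv (\<lambda>y. \<phi> t y u) x" by (rule pdx_app)
  also have "\<dots> = deriv (\<lambda>y. \<phi> t y 0 + u * (\<phi> t y 1 - \<phi> t y 0)) x"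
  proof (rule deriv_local[OF assms])
    fix y :: real assume y: "0 < y"
    show "\<phi> t y u = \<phi> t y 0 + u * (\<phi> t y 1 - \<phi> t y 0)"
      using phi_aff[OF y, of t u] Fm_diff[OF y, of t] by simp
  qed
  also have "\<dots> = pd_x \<phi> t x 0 + u * (pd_x \<phi> t x 1 - pd_x \<phi> t x 0)"
    by (rule DERIV_imp_deriv)
       (auto intro!: derivative_eq_intros line_x[OF smP partials.self assms] simp: algebra_simps)
  finally show ?thesis .
qed

lemma phi_ux: assumes "0 < x" shows "pd_u (pd_x \<phi>) t x u = pd_x \<phi> t x 1 - pd_x \<phi> t x 0"
proof -
  have "pd_u (pd_x \<phi>) t x u = deriv (\<lambda>s. pd_x \<phi> t x s) u" by (rule pdu_app)
  also have "(\<lambda>s. pd_x \<phi> t x s) = (\<lambda>s. pd_x \<phi> t x 0 + s * (pd_x \<phi> t x 1 - pd_x \<phi> t x 0))"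
    using phi_x_aff[OF assms] by blast
  also have "deriv \<dots> u = pd_x \<phi> t x 1 - pd_x \<phi> t x 0"
    by (rule DERIV_imp_deriv) (auto intro!: derivative_eq_intros)
  finally show ?thesis .
qed

lemma Fx_closed: assumes "0 < x" shows "pd_x \<phi> t x 1 - pd_x \<phi> t x 0 = Fxc t x"
proof -
  let ?F = "pd_x \<phi> t x 1 - pd_x \<phi> t x 0"
  have "(T1 t / 2 * x * ln x + b0 t * x) * k * (0 - 2 * x)
       + (T1 t - (T1 t / 2 * (ln x + 1) + b0 t)) * k * x * (0 - x)
       + \<sigma>\<^sup>2 * x\<^sup>2 / 2 * (2 * ?F - T1 t / (2 * x)) + (T2 t / 2 * x * ln x + b1 t * x) = 0"
    using eq_e[OF assms, of t 0] xi_closed[OF assms] xi_x[OF assms] xi_xx[OF assms] xi_t[OF assms]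
      tau_t'[OF assms] phi_ux[OF assms] by simp
  moreover have "\<sigma>\<^sup>2 * x\<^sup>2 * (?F - Fxc t x) = (T1 t / 2 * x * ln x + b0 t * x) * k * (0 - 2 * x)
       + (T1 t - (T1 t / 2 * (ln x + 1) + b0 t)) * k * x * (0 - x)
       + \<sigma>\<^sup>2 * x\<^sup>2 / 2 * (2 * ?F - T1 t / (2 * x)) + (T2 t / 2 * x * ln x + b1 t * x)"
    unfolding Fxc_def using sp assms by (simp add: field_simps power2_eq_square; algebra)
  ultimately have "\<sigma>\<^sup>2 * x\<^sup>2 * (?F - Fxc t x) = 0" by simp
  then have "?F - Fxc t x = 0" using sp assms by simp
  then show ?thesis by simp
qed

lemma Fm_closed: assumes "0 < x" shows "pd_u \<phi> t x 0 = Fc t x + g0 t"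
proof -
  define h where "h y = \<phi> t y 1 - \<phi> t y 0 - Fc t y" for y
  have hd: "(h has_real_derivative 0) (at y)" if y: "0 < y" for y
  proof -
    have "(h has_real_derivative (pd_x \<phi> t y 1 - pd_x \<phi> t y 0 - Fxc t y)) (at y)"
      unfolding h_def
      by (rule derivative_eq_intros line_x[OF smP partials.self y] dFc[OF y] refl)+
    then show ?thesis using Fx_closed[OF y] by simp
  qed
  have "h x = h 1" by (rule const_pos[OF hd]) (use assms in auto)
  moreover have "Fc t 1 = k * b0 t / \<sigma>\<^sup>2" unfolding Fc_def by simp
  ultimately show ?thesis unfolding h_def g0_def using Fm_diff[OF assms] Fm_diff[of 1 t] by simp
qed

lemma phi_closed: "0 < x \<Longrightarrow> \<phi> t x u = \<phi> t x 0 + u * (Fc t x + g0 t)"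
  by (metis phi_aff Fm_closed)

lemma phi_u: "0 < x \<Longrightarrow> pd_u \<phi> t x u = Fc t x + g0 t"
  by (metis phi_u_indep Fm_closed)

lemma phi_x: "0 < x \<Longrightarrow> pd_x \<phi> t x u = pd_x \<phi> t x 0 + u * Fxc t x"
  by (metis phi_x_aff Fx_closed)

lemma phi_xx: assumes "0 < x" shows "pd_x (pd_x \<phi>) t x u = pd_x (pd_x \<phi>) t x 0 + u * Fxxc t x"
proof -
  have "pd_x (pd_x \<phi>) t x u = deriv (\<lambda>y. pd_x \<phi> t y u) x" by (rule pdx_app)
  also have "\<dots> = deriv (\<lambda>y. pd_x \<phi> t y 0 + u * Fxc t y) x"
    by (rule deriv_local[OF assms]) (rule phi_x)
  also have "\<dots> = pd_x (pd_x \<phi>) t x 0 + u * Fxxc t x"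
    by (rule DERIV_imp_deriv)
       (auto intro!: derivative_eq_intros line_x[OF smP partials.dx[OF partials.self] assms] dFxc[OF assms] simp: algebra_simps)
  finally show ?thesis .
qed

lemma phi_t: assumes "0 < x"
  shows "pd_t \<phi> t x u = pd_t \<phi> t x 0 + u * (Fct t x + (m1 t - k * b1 t / \<sigma>\<^sup>2))"
proof -
  have "pd_t \<phi> t x u = deriv (\<lambda>s. \<phi> s x u) t" by (rule pdt_app)
  also have "(\<lambda>s. \<phi> s x u) = (\<lambda>s. \<phi> s x 0 + u * (Fc s x + g0 s))"
    using phi_closed[OF assms] by blast
  also have "deriv \<dots> t = pd_t \<phi> t x 0 + u * (Fct t x + (m1 t - k * b1 t / \<sigma>\<^sup>2))"
    by (rule DERIV_imp_deriv)
       (auto intro!: derivative_eq_intros line_t[OF smP partials.self assms] dFct dg0 simp: algebra_simps)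
  finally show ?thesis .
qed

end

context fwd begin

lemma key: assumes x: "0 < x"
  shows "T3 t / (4 * \<sigma>\<^sup>2) * (ln x)\<^sup>2 + b2 t / \<sigma>\<^sup>2 * ln x
       + (b1 t / 2 - T2 t / 4 - \<sigma>\<^sup>2 * T1 t / 8 - (m1 t - k * b1 t / \<sigma>\<^sup>2)) = 0"
proof -
  have e1: "(T1 t / 2 * x * ln x + b0 t * x) * 2 * lam * x + (\<phi> t x 0 + (Fc t x + g0 t)) * lam * x\<^sup>2
     + (pd_x \<phi> t x 0 + Fxc t x) * k * x * (0 - x)
     + \<sigma>\<^sup>2 * x\<^sup>2 / 2 * (pd_x (pd_x \<phi>) t x 0 + Fxxc t x)
     - (pd_t \<phi> t x 0 + (Fct t x + (m1 t - k * b1 t / \<sigma>\<^sup>2)))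
     - (Fc t x + g0 t - T1 t) * lam * x\<^sup>2 = 0"
    using eq_f[OF x, of t 1] phi_closed[OF x, of t 1] phi_x[OF x, of t 1] phi_xx[OF x, of t 1]
      phi_t[OF x, of t 1] phi_u[OF x, of t 1] xi_closed[OF x, of t 1] tau_t'[OF x, of t 1]
    by simp
  have e0: "\<phi> t x 0 * lam * x\<^sup>2 + pd_x \<phi> t x 0 * k * x * (0 - x)
     + \<sigma>\<^sup>2 * x\<^sup>2 / 2 * pd_x (pd_x \<phi>) t x 0 - pd_t \<phi> t x 0 = 0"
    using eq_f[OF x, of t 0] by simp
  have "(T1 t / 2 * x * ln x + b0 t * x) * 2 * lam * x + (Fc t x + g0 t) * lam * x\<^sup>2
     - Fxc t x * k * x * x + \<sigma>\<^sup>2 * x\<^sup>2 / 2 * Fxxc t x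
     - (Fct t x + (m1 t - k * b1 t / \<sigma>\<^sup>2))
     - (Fc t x + g0 t - T1 t) * lam * x\<^sup>2 = 0"
    using e1 e0 by (simp add: algebra_simps add_divide_distrib) linarith?
  moreover have "(T1 t / 2 * x * ln x + b0 t * x) * 2 * lam * x + (Fc t x + g0 t) * lam * x\<^sup>2
     - Fxc t x * k * x * x + \<sigma>\<^sup>2 * x\<^sup>2 / 2 * Fxxc t x
     - (Fct t x + (m1 t - k * b1 t / \<sigma>\<^sup>2))
     - (Fc t x + g0 t - T1 t) * lam * x\<^sup>2
     = (T3 t / (4 * \<sigma>\<^sup>2) * (ln x)\<^sup>2 + b2 t / \<sigma>\<^sup>2 * ln x
       + (b1 t / 2 - T2 t / 4 - \<sigma>\<^sup>2 * T1 t / 8 - (m1 t - k * b1 t / \<sigma>\<^sup>2)))"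
    unfolding Fc_def Fxc_def Fxxc_def Fct_def lamd using sp x
    by (simp add: field_simps power2_eq_square; algebra)
  ultimately show ?thesis by simp
qed

end

lemma sm_sub0:
  assumes sm: "smooth_on dom_pos f"
  shows "smooth_on dom_pos (\<lambda>t x u. f t x 0)"
proof -
  have cl: "g = (\<lambda>t x u. 0) \<or> (\<exists>h\<in>partials f. g = (\<lambda>t x u. h t x 0))"
    if "g \<in> partials (\<lambda>t x u. f t x 0)" for g
    using that
  proof (induction rule: partials.induct)
    case self show ?case using partials.self by blast
  next
    case (dt g)
    from dt.IH show ?case
    proof
      assume "g = (\<lambda>t x u. 0)" then show ?thesis by (simp add: pd_t_def)
    next
      assume "\<exists>h\<in>partials f. g = (\<lambda>t x u. h t x 0)"
      then obtain h where h: "h \<in> partials f" "g = (\<lambda>t x u. h t x 0)" by blast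
      have "pd_t g = (\<lambda>t x u. pd_t h t x 0)" unfolding h(2) by (simp add: pd_t_def)
      then show ?thesis using partials.dt[OF h(1)] by blast
    qed
  next
    case (dx g)
    from dx.IH show ?case
    proof
      assume "g = (\<lambda>t x u. 0)" then show ?thesis by (simp add: pd_x_def)
    next
      assume "\<exists>h\<in>partials f. g = (\<lambda>t x u. h t x 0)"
      then obtain h where h: "h \<in> partials f" "g = (\<lambda>t x u. h t x 0)" by blast
      have "pd_x g = (\<lambda>t x u. pd_x h t x 0)" unfolding h(2) by (simp add: pd_x_def)
      then show ?thesis using partials.dx[OF h(1)] by blast
    qed
  next
    case (du g)
    from du.IH show ?case
    proof
      assume "g = (\<lambda>t x u. 0)" then show ?thesis by (simp add: pd_u_def)
    next
      assume "\<exists>h\<in>partials f. g = (\<lambda>t x u. h t x 0)"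
      then obtain h where h: "h \<in> partials f" "g = (\<lambda>t x u. h t x 0)" by blast
      show ?thesis unfolding h(2) by (simp add: pd_u_def)
    qed
  qed
  show ?thesis unfolding smooth_on_def
  proof (intro ballI)
    fix g p assume g: "g \<in> partials (\<lambda>t x u. f t x 0)" and p: "p \<in> dom_pos"
    obtain t x u where pe: "p = (t, x, u)" and x: "0 < x" using p unfolding dom_pos_def by auto
    from cl[OF g] show "(\<lambda>(t, x, u). g t x u) differentiable (at p)"
    proof
      assume "g = (\<lambda>t x u. 0)"
      then have "(\<lambda>(t, x, u). g t x u) = (\<lambda>_. 0)" by auto
      then show ?thesis by simp
    next
      assume "\<exists>h\<in>partials f. g = (\<lambda>t x u. h t x 0)"
      then obtain h where h: "h \<in> partials f" "g = (\<lambda>t x u. h t x 0)" by blast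
      have eq: "(\<lambda>(t, x, u). g t x u) = (\<lambda>(t, x, u). h t x u) \<circ> (\<lambda>q. (fst q, fst (snd q), 0::real))"
        unfolding h(2) by auto
      have i: "(\<lambda>q::real\<times>real\<times>real. (fst q, fst (snd q), 0::real)) differentiable (at p)"
        by (rule differentiableI[where f'="\<lambda>q. (fst q, fst (snd q), 0)"])
           (auto intro!: derivative_eq_intros)
      have o: "(\<lambda>(t, x, u). h t x u) differentiable (at ((\<lambda>q. (fst q, fst (snd q), 0::real)) p))"
        using sm h(1) x unfolding smooth_on_def dom_pos_def pe by auto
      show ?thesis unfolding eq by (rule differentiable_chain_at[OF i o])
    qed
  qed
qed

context fwd begin

lemma coefs: "T3 t = 0 \<and> b2 t = 0 \<and> m1 t - k * b1 t / \<sigma>\<^sup>2 = b1 t / 2 - T2 t / 4 - \<sigma>\<^sup>2 * T1 t / 8"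
proof -
  have k1: "b1 t / 2 - T2 t / 4 - \<sigma>\<^sup>2 * T1 t / 8 - (m1 t - k * b1 t / \<sigma>\<^sup>2) = 0"
    using key[of 1 t] by simp
  have k2: "T3 t / (4 * \<sigma>\<^sup>2) + b2 t / \<sigma>\<^sup>2 = 0"
    using key[of "exp 1" t] k1 by simp
  have k3: "T3 t / (4 * \<sigma>\<^sup>2) - b2 t / \<sigma>\<^sup>2 = 0"
    using key[of "exp (-1)" t] k1 by simp
  have "T3 t / (4 * \<sigma>\<^sup>2) = 0" using k2 k3 by linarith
  then have a: "T3 t = 0" using sp by simp
  have "b2 t / \<sigma>\<^sup>2 = 0" using k2 k3 by linarith
  then have b: "b2 t = 0" using sp by simp
  show ?thesis using a b k1 by simp
qed

lemma T2c: "T2 t = T2 0"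
  by (rule const_all) (metis dT2 coefs)

lemma T1c: "T1 t = T1 0 + T2 0 * t"
proof -
  have d: "((\<lambda>s. T1 s - T2 0 * s) has_real_derivative 0) (at y)" for y
  proof -
    have "((\<lambda>s. T1 s - T2 0 * s) has_real_derivative (T2 y - T2 0 * 1)) (at y)"
      by (auto intro!: derivative_eq_intros dT1)
    then show ?thesis using T2c[of y] by simp
  qed
  show ?thesis using const_all[OF d, of t 0] by simp
qed

lemma T0c: "\<tau> t 1 0 = \<tau> 0 1 0 + T1 0 * t + T2 0 / 2 * t\<^sup>2"
proof -
  have d: "((\<lambda>s. \<tau> s 1 0 - T1 0 * s - T2 0 / 2 * s\<^sup>2) has_real_derivative 0) (at y)" for y
  proof -
    have "((\<lambda>s. \<tau> s 1 0 - T1 0 * s - T2 0 / 2 * s\<^sup>2) has_real_derivative (T1 y - T1 0 * 1 - T2 0 / 2 * (2 * y))) (at y)"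
      by (auto intro!: derivative_eq_intros dT0)
    then show ?thesis using T1c[of y] by simp
  qed
  show ?thesis using const_all[OF d, of t 0] by simp
qed

lemma b1c: "b1 t = b1 0"
  by (rule const_all) (metis db1 coefs)

lemma b0c: "b0 t = b0 0 + b1 0 * t"
proof -
  have d: "((\<lambda>s. b0 s - b1 0 * s) has_real_derivative 0) (at y)" for y
  proof -
    have "((\<lambda>s. b0 s - b1 0 * s) has_real_derivative (b1 y - b1 0 * 1)) (at y)"
      by (auto intro!: derivative_eq_intros db0)
    then show ?thesis using b1c[of y] by simp
  qed
  show ?thesis using const_all[OF d, of t 0] by simp
qed

lemma g0c: "g0 t = g0 0 + (b1 0 / 2 - T2 0 / 4 - \<sigma>\<^sup>2 * T1 0 / 8) * t - \<sigma>\<^sup>2 * T2 0 / 16 * t\<^sup>2"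
proof -
  have d: "((\<lambda>s. g0 s - (b1 0 / 2 - T2 0 / 4 - \<sigma>\<^sup>2 * T1 0 / 8) * s + \<sigma>\<^sup>2 * T2 0 / 16 * s\<^sup>2) has_real_derivative 0) (at y)" for y
  proof -
    have "((\<lambda>s. g0 s - (b1 0 / 2 - T2 0 / 4 - \<sigma>\<^sup>2 * T1 0 / 8) * s + \<sigma>\<^sup>2 * T2 0 / 16 * s\<^sup>2) has_real_derivative
       ((m1 y - k * b1 y / \<sigma>\<^sup>2) - (b1 0 / 2 - T2 0 / 4 - \<sigma>\<^sup>2 * T1 0 / 8) * 1 + \<sigma>\<^sup>2 * T2 0 / 16 * (2 * y))) (at y)"
      by (auto intro!: derivative_eq_intros dg0)
    moreover have "(m1 y - k * b1 y / \<sigma>\<^sup>2) - (b1 0 / 2 - T2 0 / 4 - \<sigma>\<^sup>2 * T1 0 / 8) * 1 + \<sigma>\<^sup>2 * T2 0 / 16 * (2 * y) = 0"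
      using coefs[of y] b1c[of y] T2c[of y] T1c[of y] by (simp add: field_simps)
    ultimately show ?thesis by simp
  qed
  show ?thesis using const_all[OF d, of t 0] by simp
qed

lemma fwd_main:
  "\<exists>c1 c2 c3 c4 c5 c6 :: real. \<exists>w. is_solution \<sigma> k 0 lam w \<and>
      (\<forall>t x u. x > 0 \<longrightarrow>
        \<tau> t x u = c1 + c2 * t + c3 * t\<^sup>2 \<and>
        \<xi> t x u = c2 * (1/2 * x * ln x) + c3 * (t * x * ln x) + c4 * x + c5 * (t * x) \<and>
        \<phi> t x u =
            c2 * ((k / (2 * \<sigma>\<^sup>2) * x * ln x + 1/4 * ln x - \<sigma>\<^sup>2 / 8 * t) * u)
          + c3 * ((k / \<sigma>\<^sup>2 * t * x * ln x - 1 / (2 * \<sigma>\<^sup>2) * (ln x)\<^sup>2 + 1/2 * t * ln x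
                   - \<sigma>\<^sup>2 / 8 * t\<^sup>2 - 1/2 * t) * u)
          + c4 * (k / \<sigma>\<^sup>2 * x * u)
          + c5 * ((k / \<sigma>\<^sup>2 * t * x - 1 / \<sigma>\<^sup>2 * ln x + 1/2 * t) * u)
          + c6 * u
          + w t x)"
proof (intro exI conjI allI impI)
  show "is_solution \<sigma> k 0 lam (\<lambda>t x. \<phi> t x 0)"
    unfolding is_solution_def
  proof (intro conjI allI impI)
    show "smooth_on dom_pos (\<lambda>t x u. \<phi> t x 0)" by (rule sm_sub0[OF smP])
    fix t x :: real assume x: "0 < x"
    have e0: "\<phi> t x 0 * lam * x\<^sup>2 + pd_x \<phi> t x 0 * k * x * (0 - x)
       + \<sigma>\<^sup>2 * x\<^sup>2 / 2 * pd_x (pd_x \<phi>) t x 0 - pd_t \<phi> t x 0 = 0"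
      using eq_f[OF x, of t 0] by simp
    have "(\<lambda>s. pd_x \<phi> t s 0) = deriv (\<lambda>y. \<phi> t y 0)" by (auto simp: pdx_app)
    then have "pd_x (pd_x \<phi>) t x 0 = deriv (deriv (\<lambda>y. \<phi> t y 0)) x"
      by (simp add: pdx_app[of "pd_x \<phi>"])
    moreover have "pd_x \<phi> t x 0 = deriv (\<lambda>y. \<phi> t y 0) x" by (rule pdx_app)
    moreover have "pd_t \<phi> t x 0 = deriv (\<lambda>s. \<phi> s x 0) t" by (rule pdt_app)
    ultimately show "deriv (\<lambda>s. \<phi> s x 0) t =
          1/2 * \<sigma>\<^sup>2 * x\<^sup>2 * deriv (deriv (\<lambda>y. \<phi> t y 0)) x
          + k * x * (0 - x) * deriv (\<lambda>y. \<phi> t y 0) x + lam * x\<^sup>2 * \<phi> t x 0"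
      using e0 by (simp add: algebra_simps)
  qed
next
  fix t x u :: real assume x: "0 < x"
  show "\<tau> t x u = \<tau> 0 1 0 + T1 0 * t + T2 0 / 2 * t\<^sup>2"
    using tau_indep[OF x, of t u] T0c[of t] by simp
  show "\<xi> t x u = T1 0 * (1/2 * x * ln x) + T2 0 / 2 * (t * x * ln x) + b0 0 * x + b1 0 * (t * x)"
    using xi_closed[OF x, of t u] T1c[of t] b0c[of t] by (simp add: algebra_simps)
  have "\<phi> t x u = \<phi> t x 0 + u * (Fc t x + g0 t)" by (rule phi_closed[OF x])
  also have "\<dots> = T1 0 * ((k / (2 * \<sigma>\<^sup>2) * x * ln x + 1/4 * ln x - \<sigma>\<^sup>2 / 8 * t) * u)
          + T2 0 / 2 * ((k / \<sigma>\<^sup>2 * t * x * ln x - 1 / (2 * \<sigma>\<^sup>2) * (ln x)\<^sup>2 + 1/2 * t * ln x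
                   - \<sigma>\<^sup>2 / 8 * t\<^sup>2 - 1/2 * t) * u)
          + b0 0 * (k / \<sigma>\<^sup>2 * x * u)
          + b1 0 * ((k / \<sigma>\<^sup>2 * t * x - 1 / \<sigma>\<^sup>2 * ln x + 1/2 * t) * u)
          + g0 0 * u
          + \<phi> t x 0"
    unfolding Fc_def T1c[of t] T2c[of t] b0c[of t] b1c[of t] g0c[of t] using sp
    by (simp add: field_simps power2_eq_square; algebra)
  finally show "\<phi> t x u = T1 0 * ((k / (2 * \<sigma>\<^sup>2) * x * ln x + 1/4 * ln x - \<sigma>\<^sup>2 / 8 * t) * u)
          + T2 0 / 2 * ((k / \<sigma>\<^sup>2 * t * x * ln x - 1 / (2 * \<sigma>\<^sup>2) * (ln x)\<^sup>2 + 1/2 * t * ln x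
                   - \<sigma>\<^sup>2 / 8 * t\<^sup>2 - 1/2 * t) * u)
          + b0 0 * (k / \<sigma>\<^sup>2 * x * u)
          + b1 0 * ((k / \<sigma>\<^sup>2 * t * x - 1 / \<sigma>\<^sup>2 * ln x + 1/2 * t) * u)
          + g0 0 * u
          + (\<lambda>t x. \<phi> t x 0) t x" by simp
qed

end

definition agr :: "(real \<Rightarrow> real \<Rightarrow> real \<Rightarrow> real) \<Rightarrow> (real \<Rightarrow> real \<Rightarrow> real \<Rightarrow> real) \<Rightarrow> bool" where
  "agr f g \<longleftrightarrow> (\<forall>t x u. 0 < x \<longrightarrow> f t x u = g t x u)"

lemma agr_trans: "agr f g \<Longrightarrow> agr g h \<Longrightarrow> agr f h" unfolding agr_def by simp

inductive_set SM :: "(real \<Rightarrow> real \<Rightarrow> real \<Rightarrow> real) set \<Rightarrow> (real \<Rightarrow> real \<Rightarrow> real \<Rightarrow> real) set"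
  for W where
  cst: "(\<lambda>t x u. c) \<in> SM W"
| vt: "(\<lambda>t x u. t) \<in> SM W"
| vx: "(\<lambda>t x u. x) \<in> SM W"
| vu: "(\<lambda>t x u. u) \<in> SM W"
| lnx: "(\<lambda>t x u. ln x) \<in> SM W"
| invx: "(\<lambda>t x u. inverse x) \<in> SM W"
| add: "f \<in> SM W \<Longrightarrow> g \<in> SM W \<Longrightarrow> (\<lambda>t x u. f t x u + g t x u) \<in> SM W"
| sub: "f \<in> SM W \<Longrightarrow> g \<in> SM W \<Longrightarrow> (\<lambda>t x u. f t x u - g t x u) \<in> SM W"
| mul: "f \<in> SM W \<Longrightarrow> g \<in> SM W \<Longrightarrow> (\<lambda>t x u. f t x u * g t x u) \<in> SM W"
| base: "h \<in> W \<Longrightarrow> h \<in> SM W"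

lemma U_eq: "(\<lambda>(t, x, u). f t x u) = (\<lambda>q. f (fst q) (fst (snd q)) (snd (snd q)))"
  by auto

lemma diff_x_comp:
  assumes "(g has_real_derivative D) (at x)"
  shows "(\<lambda>q::real\<times>real\<times>real. g (fst (snd q))) differentiable (at (t, x, u))"
proof -
  have "g differentiable (at (fst (snd (t, x, u))))"
    using assms by (auto simp: has_field_derivative_def intro: differentiableI)
  moreover have "(\<lambda>q::real\<times>real\<times>real. fst (snd q)) differentiable (at (t, x, u))"
    by (rule differentiableI, rule has_derivative_fst[OF has_derivative_snd[OF has_derivative_ident]])
  ultimately show ?thesis by (rule differentiable_compose)
qed

lemma SM_diff:
  assumes W1: "\<And>h t x u. h \<in> W \<Longrightarrow> 0 < x \<Longrightarrow> (\<lambda>(t, x, u). h t x u) differentiable (at (t, x, u))"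
    and f: "f \<in> SM W"
  shows "0 < x \<Longrightarrow> (\<lambda>(t, x, u). f t x u) differentiable (at (t, x, u))"
  using f
proof (induction arbitrary: t x u rule: SM.induct)
  case (cst c) then show ?case by (simp add: U_eq)
next
  case vt show ?case unfolding U_eq
    by (rule differentiableI, rule has_derivative_fst[OF has_derivative_ident])
next
  case vx show ?case unfolding U_eq
    by (rule differentiableI, rule has_derivative_fst[OF has_derivative_snd[OF has_derivative_ident]])
next
  case vu show ?case unfolding U_eq
    by (rule differentiableI, rule has_derivative_snd[OF has_derivative_snd[OF has_derivative_ident]])
next
  case lnx then show ?case unfolding U_eq by (intro diff_x_comp[where D="inverse x"] DERIV_ln)
next
  case invx then show ?case unfolding U_eq by (intro diff_x_comp[where D="- (inverse x ^ Suc (Suc 0))"] DERIV_inverse) simp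
next
  case (add f g) then show ?case unfolding U_eq by (intro differentiable_add) (simp_all add: U_eq)
next
  case (sub f g) then show ?case unfolding U_eq by (intro differentiable_diff) (simp_all add: U_eq)
next
  case (mul f g) then show ?case unfolding U_eq by (intro differentiable_mult) (simp_all add: U_eq)
next
  case (base h) then show ?case using W1 by blast
qed

lemma agr_pd_t: "agr f g \<Longrightarrow> agr (pd_t f) (pd_t g)"
  unfolding agr_def pd_t_def by simp

lemma agr_pd_u: assumes "agr f g" shows "agr (pd_u f) (pd_u g)"
  unfolding agr_def
proof (intro allI impI)
  fix t x u :: real assume x: "0 < x"
  have "(\<lambda>s. f t x s) = (\<lambda>s. g t x s)" using assms x by (auto simp: agr_def)
  then show "pd_u f t x u = pd_u g t x u" by (simp add: pdu_app)
qed

lemma agr_pd_x: "agr f g \<Longrightarrow> agr (pd_x f) (pd_x g)"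
  unfolding agr_def pdx_app by (auto intro!: deriv_local)

lemma open_pos: "open {q::real\<times>real\<times>real. 0 < fst (snd q)}"
  by (rule open_Collect_less) (auto intro!: continuous_intros)

lemma agr_diff:
  assumes "agr f g" "0 < x" "(\<lambda>(t, x, u). g t x u) differentiable (at (t, x, u))"
  shows "(\<lambda>(t, x, u). f t x u) differentiable (at (t, x, u))"
proof -
  obtain D where D: "((\<lambda>(t, x, u). g t x u) has_derivative D) (at (t, x, u))"
    using assms(3) unfolding differentiable_def by blast
  have "((\<lambda>(t, x, u). f t x u) has_derivative D) (at (t, x, u))"
    by (rule has_derivative_transform_within_open[OF D open_pos]) (use assms(1,2) in \<open>auto simp: agr_def\<close>)
  then show ?thesis unfolding differentiable_def by blast
qed


lemma SM_pd_t:
  assumes W1: "\<And>h t x u. h \<in> W \<Longrightarrow> 0 < x \<Longrightarrow> (\<lambda>(t, x, u). h t x u) differentiable (at (t, x, u))"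
    and W2: "\<And>h. h \<in> W \<Longrightarrow> pd_t h \<in> W" and f: "f \<in> SM W"
  shows "\<exists>g\<in>SM W. agr (pd_t f) g"
  using f
proof (induction rule: SM.induct)
  case (cst c) show ?case by (rule bexI[of _ "\<lambda>t x u. 0"]) (auto simp: agr_def pd_t_def intro: SM.cst)
next
  case vt show ?case by (rule bexI[of _ "\<lambda>t x u. 1"]) (auto simp: agr_def pd_t_def intro: SM.cst)
next
  case vx show ?case by (rule bexI[of _ "\<lambda>t x u. 0"]) (auto simp: agr_def pd_t_def intro: SM.cst)
next
  case vu show ?case by (rule bexI[of _ "\<lambda>t x u. 0"]) (auto simp: agr_def pd_t_def intro: SM.cst)
next
  case lnx show ?case by (rule bexI[of _ "\<lambda>t x u. 0"]) (auto simp: agr_def pd_t_def intro: SM.cst)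
next
  case invx show ?case by (rule bexI[of _ "\<lambda>t x u. 0"]) (auto simp: agr_def pd_t_def intro: SM.cst)
next
  case (add f g)
  from add.IH obtain g1 g2 where g: "g1 \<in> SM W" "agr (pd_t f) g1" "g2 \<in> SM W" "agr (pd_t g) g2" by blast
  show ?case
  proof (rule bexI[of _ "\<lambda>t x u. g1 t x u + g2 t x u"])
    show "(\<lambda>t x u. g1 t x u + g2 t x u) \<in> SM W" using g by (intro SM.add)
    show "agr (pd_t (\<lambda>t x u. f t x u + g t x u)) (\<lambda>t x u. g1 t x u + g2 t x u)"
      unfolding agr_def
    proof (intro allI impI)
      fix t x u :: real assume x: "0 < x"
      have "pd_t (\<lambda>t x u. f t x u + g t x u) t x u = pd_t f t x u + pd_t g t x u"
        unfolding pdt_app[of "\<lambda>t x u. f t x u + g t x u"]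
        by (rule DERIV_imp_deriv) (auto intro!: derivative_eq_intros gline_t[OF SM_diff[OF W1 \<open>f \<in> SM W\<close> x]] gline_t[OF SM_diff[OF W1 \<open>g \<in> SM W\<close> x]])
      then show "pd_t (\<lambda>t x u. f t x u + g t x u) t x u = g1 t x u + g2 t x u"
        using g x by (simp add: agr_def)
    qed
  qed
next
  case (sub f g)
  from sub.IH obtain g1 g2 where g: "g1 \<in> SM W" "agr (pd_t f) g1" "g2 \<in> SM W" "agr (pd_t g) g2" by blast
  show ?case
  proof (rule bexI[of _ "\<lambda>t x u. g1 t x u - g2 t x u"])
    show "(\<lambda>t x u. g1 t x u - g2 t x u) \<in> SM W" using g by (intro SM.sub)
    show "agr (pd_t (\<lambda>t x u. f t x u - g t x u)) (\<lambda>t x u. g1 t x u - g2 t x u)"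
      unfolding agr_def
    proof (intro allI impI)
      fix t x u :: real assume x: "0 < x"
      have "pd_t (\<lambda>t x u. f t x u - g t x u) t x u = pd_t f t x u - pd_t g t x u"
        unfolding pdt_app[of "\<lambda>t x u. f t x u - g t x u"]
        by (rule DERIV_imp_deriv) (auto intro!: derivative_eq_intros gline_t[OF SM_diff[OF W1 \<open>f \<in> SM W\<close> x]] gline_t[OF SM_diff[OF W1 \<open>g \<in> SM W\<close> x]])
      then show "pd_t (\<lambda>t x u. f t x u - g t x u) t x u = g1 t x u - g2 t x u"
        using g x by (simp add: agr_def)
    qed
  qed
next
  case (mul f g)
  from mul.IH obtain g1 g2 where g: "g1 \<in> SM W" "agr (pd_t f) g1" "g2 \<in> SM W" "agr (pd_t g) g2" by blast
  show ?case
  proof (rule bexI[of _ "\<lambda>t x u. g1 t x u * g t x u + f t x u * g2 t x u"])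
    show "(\<lambda>t x u. g1 t x u * g t x u + f t x u * g2 t x u) \<in> SM W" using g mul.hyps by (intro SM.add SM.mul)
    show "agr (pd_t (\<lambda>t x u. f t x u * g t x u)) (\<lambda>t x u. g1 t x u * g t x u + f t x u * g2 t x u)"
      unfolding agr_def
    proof (intro allI impI)
      fix t x u :: real assume x: "0 < x"
      have "pd_t (\<lambda>t x u. f t x u * g t x u) t x u = pd_t f t x u * g t x u + f t x u * pd_t g t x u"
        unfolding pdt_app[of "\<lambda>t x u. f t x u * g t x u"]
        by (rule DERIV_imp_deriv) (auto intro!: derivative_eq_intros gline_t[OF SM_diff[OF W1 \<open>f \<in> SM W\<close> x]] gline_t[OF SM_diff[OF W1 \<open>g \<in> SM W\<close> x]])
      then show "pd_t (\<lambda>t x u. f t x u * g t x u) t x u = g1 t x u * g t x u + f t x u * g2 t x u"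
        using g x by (simp add: agr_def)
    qed
  qed
next
  case (base h) show ?case using W2[OF base] by (auto simp: agr_def intro: SM.base)
qed

lemma SM_pd_x:
  assumes W1: "\<And>h t x u. h \<in> W \<Longrightarrow> 0 < x \<Longrightarrow> (\<lambda>(t, x, u). h t x u) differentiable (at (t, x, u))"
    and W2: "\<And>h. h \<in> W \<Longrightarrow> pd_x h \<in> W" and f: "f \<in> SM W"
  shows "\<exists>g\<in>SM W. agr (pd_x f) g"
  using f
proof (induction rule: SM.induct)
  case (cst c) show ?case by (rule bexI[of _ "\<lambda>t x u. 0"]) (auto simp: agr_def pd_x_def intro: SM.cst)
next
  case vt show ?case by (rule bexI[of _ "\<lambda>t x u. 0"]) (auto simp: agr_def pd_x_def intro: SM.cst)
next
  case vx show ?case by (rule bexI[of _ "\<lambda>t x u. 1"]) (auto simp: agr_def pd_x_def intro: SM.cst)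
next
  case vu show ?case by (rule bexI[of _ "\<lambda>t x u. 0"]) (auto simp: agr_def pd_x_def intro: SM.cst)
next
  case lnx show ?case by (rule bexI[of _ "\<lambda>t x u. inverse x"]) (auto simp: agr_def pdx_app intro: SM.invx DERIV_imp_deriv DERIV_ln)
next
  case invx show ?case proof (rule bexI[of _ "\<lambda>t x u. (-1) * (inverse x * inverse x)"])
    show "(\<lambda>t x u. (-1) * (inverse x * inverse x)) \<in> SM W" by (intro SM.mul SM.cst SM.invx)
    show "agr (pd_x (\<lambda>t x u. inverse x)) (\<lambda>t x u. (-1) * (inverse x * inverse x))"
      unfolding agr_def pdx_app
    proof (intro allI impI)
      fix t x u :: real assume x: "0 < x"
      have "deriv (\<lambda>s. inverse s) x = - (inverse x ^ Suc (Suc 0))"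
        by (rule DERIV_imp_deriv, rule DERIV_inverse) (use x in simp)
      then show "deriv (\<lambda>s. inverse s) x = (-1) * (inverse x * inverse x)" by simp
    qed
  qed
next
  case (add f g)
  from add.IH obtain g1 g2 where g: "g1 \<in> SM W" "agr (pd_x f) g1" "g2 \<in> SM W" "agr (pd_x g) g2" by blast
  show ?case
  proof (rule bexI[of _ "\<lambda>t x u. g1 t x u + g2 t x u"])
    show "(\<lambda>t x u. g1 t x u + g2 t x u) \<in> SM W" using g by (intro SM.add)
    show "agr (pd_x (\<lambda>t x u. f t x u + g t x u)) (\<lambda>t x u. g1 t x u + g2 t x u)"
      unfolding agr_def
    proof (intro allI impI)
      fix t x u :: real assume x: "0 < x"
      have "pd_x (\<lambda>t x u. f t x u + g t x u) t x u = pd_x f t x u + pd_x g t x u"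
        unfolding pdx_app[of "\<lambda>t x u. f t x u + g t x u"]
        by (rule DERIV_imp_deriv) (auto intro!: derivative_eq_intros gline_x[OF SM_diff[OF W1 \<open>f \<in> SM W\<close> x]] gline_x[OF SM_diff[OF W1 \<open>g \<in> SM W\<close> x]])
      then show "pd_x (\<lambda>t x u. f t x u + g t x u) t x u = g1 t x u + g2 t x u"
        using g x by (simp add: agr_def)
    qed
  qed
next
  case (sub f g)
  from sub.IH obtain g1 g2 where g: "g1 \<in> SM W" "agr (pd_x f) g1" "g2 \<in> SM W" "agr (pd_x g) g2" by blast
  show ?case
  proof (rule bexI[of _ "\<lambda>t x u. g1 t x u - g2 t x u"])
    show "(\<lambda>t x u. g1 t x u - g2 t x u) \<in> SM W" using g by (intro SM.sub)
    show "agr (pd_x (\<lambda>t x u. f t x u - g t x u)) (\<lambda>t x u. g1 t x u - g2 t x u)"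
      unfolding agr_def
    proof (intro allI impI)
      fix t x u :: real assume x: "0 < x"
      have "pd_x (\<lambda>t x u. f t x u - g t x u) t x u = pd_x f t x u - pd_x g t x u"
        unfolding pdx_app[of "\<lambda>t x u. f t x u - g t x u"]
        by (rule DERIV_imp_deriv) (auto intro!: derivative_eq_intros gline_x[OF SM_diff[OF W1 \<open>f \<in> SM W\<close> x]] gline_x[OF SM_diff[OF W1 \<open>g \<in> SM W\<close> x]])
      then show "pd_x (\<lambda>t x u. f t x u - g t x u) t x u = g1 t x u - g2 t x u"
        using g x by (simp add: agr_def)
    qed
  qed
next
  case (mul f g)
  from mul.IH obtain g1 g2 where g: "g1 \<in> SM W" "agr (pd_x f) g1" "g2 \<in> SM W" "agr (pd_x g) g2" by blast
  show ?case
  proof (rule bexI[of _ "\<lambda>t x u. g1 t x u * g t x u + f t x u * g2 t x u"])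
    show "(\<lambda>t x u. g1 t x u * g t x u + f t x u * g2 t x u) \<in> SM W" using g mul.hyps by (intro SM.add SM.mul)
    show "agr (pd_x (\<lambda>t x u. f t x u * g t x u)) (\<lambda>t x u. g1 t x u * g t x u + f t x u * g2 t x u)"
      unfolding agr_def
    proof (intro allI impI)
      fix t x u :: real assume x: "0 < x"
      have "pd_x (\<lambda>t x u. f t x u * g t x u) t x u = pd_x f t x u * g t x u + f t x u * pd_x g t x u"
        unfolding pdx_app[of "\<lambda>t x u. f t x u * g t x u"]
        by (rule DERIV_imp_deriv) (auto intro!: derivative_eq_intros gline_x[OF SM_diff[OF W1 \<open>f \<in> SM W\<close> x]] gline_x[OF SM_diff[OF W1 \<open>g \<in> SM W\<close> x]])
      then show "pd_x (\<lambda>t x u. f t x u * g t x u) t x u = g1 t x u * g t x u + f t x u * g2 t x u"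
        using g x by (simp add: agr_def)
    qed
  qed
next
  case (base h) show ?case using W2[OF base] by (auto simp: agr_def intro: SM.base)
qed

lemma SM_pd_u:
  assumes W1: "\<And>h t x u. h \<in> W \<Longrightarrow> 0 < x \<Longrightarrow> (\<lambda>(t, x, u). h t x u) differentiable (at (t, x, u))"
    and W2: "\<And>h. h \<in> W \<Longrightarrow> pd_u h \<in> W" and f: "f \<in> SM W"
  shows "\<exists>g\<in>SM W. agr (pd_u f) g"
  using f
proof (induction rule: SM.induct)
  case (cst c) show ?case by (rule bexI[of _ "\<lambda>t x u. 0"]) (auto simp: agr_def pd_u_def intro: SM.cst)
next
  case vt show ?case by (rule bexI[of _ "\<lambda>t x u. 0"]) (auto simp: agr_def pd_u_def intro: SM.cst)
next
  case vx show ?case by (rule bexI[of _ "\<lambda>t x u. 0"]) (auto simp: agr_def pd_u_def intro: SM.cst)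
next
  case vu show ?case by (rule bexI[of _ "\<lambda>t x u. 1"]) (auto simp: agr_def pd_u_def intro: SM.cst)
next
  case lnx show ?case by (rule bexI[of _ "\<lambda>t x u. 0"]) (auto simp: agr_def pd_u_def intro: SM.cst)
next
  case invx show ?case by (rule bexI[of _ "\<lambda>t x u. 0"]) (auto simp: agr_def pd_u_def intro: SM.cst)
next
  case (add f g)
  from add.IH obtain g1 g2 where g: "g1 \<in> SM W" "agr (pd_u f) g1" "g2 \<in> SM W" "agr (pd_u g) g2" by blast
  show ?case
  proof (rule bexI[of _ "\<lambda>t x u. g1 t x u + g2 t x u"])
    show "(\<lambda>t x u. g1 t x u + g2 t x u) \<in> SM W" using g by (intro SM.add)
    show "agr (pd_u (\<lambda>t x u. f t x u + g t x u)) (\<lambda>t x u. g1 t x u + g2 t x u)"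
      unfolding agr_def
    proof (intro allI impI)
      fix t x u :: real assume x: "0 < x"
      have "pd_u (\<lambda>t x u. f t x u + g t x u) t x u = pd_u f t x u + pd_u g t x u"
        unfolding pdu_app[of "\<lambda>t x u. f t x u + g t x u"]
        by (rule DERIV_imp_deriv) (auto intro!: derivative_eq_intros gline_u[OF SM_diff[OF W1 \<open>f \<in> SM W\<close> x]] gline_u[OF SM_diff[OF W1 \<open>g \<in> SM W\<close> x]])
      then show "pd_u (\<lambda>t x u. f t x u + g t x u) t x u = g1 t x u + g2 t x u"
        using g x by (simp add: agr_def)
    qed
  qed
next
  case (sub f g)
  from sub.IH obtain g1 g2 where g: "g1 \<in> SM W" "agr (pd_u f) g1" "g2 \<in> SM W" "agr (pd_u g) g2" by blast
  show ?case
  proof (rule bexI[of _ "\<lambda>t x u. g1 t x u - g2 t x u"])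
    show "(\<lambda>t x u. g1 t x u - g2 t x u) \<in> SM W" using g by (intro SM.sub)
    show "agr (pd_u (\<lambda>t x u. f t x u - g t x u)) (\<lambda>t x u. g1 t x u - g2 t x u)"
      unfolding agr_def
    proof (intro allI impI)
      fix t x u :: real assume x: "0 < x"
      have "pd_u (\<lambda>t x u. f t x u - g t x u) t x u = pd_u f t x u - pd_u g t x u"
        unfolding pdu_app[of "\<lambda>t x u. f t x u - g t x u"]
        by (rule DERIV_imp_deriv) (auto intro!: derivative_eq_intros gline_u[OF SM_diff[OF W1 \<open>f \<in> SM W\<close> x]] gline_u[OF SM_diff[OF W1 \<open>g \<in> SM W\<close> x]])
      then show "pd_u (\<lambda>t x u. f t x u - g t x u) t x u = g1 t x u - g2 t x u"
        using g x by (simp add: agr_def)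
    qed
  qed
next
  case (mul f g)
  from mul.IH obtain g1 g2 where g: "g1 \<in> SM W" "agr (pd_u f) g1" "g2 \<in> SM W" "agr (pd_u g) g2" by blast
  show ?case
  proof (rule bexI[of _ "\<lambda>t x u. g1 t x u * g t x u + f t x u * g2 t x u"])
    show "(\<lambda>t x u. g1 t x u * g t x u + f t x u * g2 t x u) \<in> SM W" using g mul.hyps by (intro SM.add SM.mul)
    show "agr (pd_u (\<lambda>t x u. f t x u * g t x u)) (\<lambda>t x u. g1 t x u * g t x u + f t x u * g2 t x u)"
      unfolding agr_def
    proof (intro allI impI)
      fix t x u :: real assume x: "0 < x"
      have "pd_u (\<lambda>t x u. f t x u * g t x u) t x u = pd_u f t x u * g t x u + f t x u * pd_u g t x u"
        unfolding pdu_app[of "\<lambda>t x u. f t x u * g t x u"]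
        by (rule DERIV_imp_deriv) (auto intro!: derivative_eq_intros gline_u[OF SM_diff[OF W1 \<open>f \<in> SM W\<close> x]] gline_u[OF SM_diff[OF W1 \<open>g \<in> SM W\<close> x]])
      then show "pd_u (\<lambda>t x u. f t x u * g t x u) t x u = g1 t x u * g t x u + f t x u * g2 t x u"
        using g x by (simp add: agr_def)
    qed
  qed
next
  case (base h) show ?case using W2[OF base] by (auto simp: agr_def intro: SM.base)
qed


lemma smooth_SM:
  assumes W1: "\<And>h t x u. h \<in> W \<Longrightarrow> 0 < x \<Longrightarrow> (\<lambda>(t, x, u). h t x u) differentiable (at (t, x, u))"
    and W2t: "\<And>h. h \<in> W \<Longrightarrow> pd_t h \<in> W"
    and W2x: "\<And>h. h \<in> W \<Longrightarrow> pd_x h \<in> W"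
    and W2u: "\<And>h. h \<in> W \<Longrightarrow> pd_u h \<in> W"
    and g: "g \<in> SM W" and a: "agr f g"
  shows "smooth_on dom_pos f"
proof -
  have cl: "\<exists>g'\<in>SM W. agr h g'" if "h \<in> partials f" for h
    using that
  proof (induction rule: partials.induct)
    case self show ?case using g a by blast
  next
    case (dt h)
    then obtain g' where g': "g' \<in> SM W" "agr h g'" by blast
    obtain g'' where "g'' \<in> SM W" "agr (pd_t g') g''" using SM_pd_t[OF W1 W2t g'(1)] by blast
    then show ?case using agr_trans[OF agr_pd_t[OF g'(2)]] by blast
  next
    case (dx h)
    then obtain g' where g': "g' \<in> SM W" "agr h g'" by blast
    obtain g'' where "g'' \<in> SM W" "agr (pd_x g') g''" using SM_pd_x[OF W1 W2x g'(1)] by blast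
    then show ?case using agr_trans[OF agr_pd_x[OF g'(2)]] by blast
  next
    case (du h)
    then obtain g' where g': "g' \<in> SM W" "agr h g'" by blast
    obtain g'' where "g'' \<in> SM W" "agr (pd_u g') g''" using SM_pd_u[OF W1 W2u g'(1)] by blast
    then show ?case using agr_trans[OF agr_pd_u[OF g'(2)]] by blast
  qed
  show ?thesis unfolding smooth_on_def
  proof (intro ballI)
    fix h p assume h: "h \<in> partials f" and p: "p \<in> dom_pos"
    obtain t x u where pe: "p = (t, x, u)" and x: "0 < x" using p unfolding dom_pos_def by auto
    obtain g' where "g' \<in> SM W" "agr h g'" using cl[OF h] by blast
    then show "(\<lambda>(t, x, u). h t x u) differentiable (at p)"
      unfolding pe using agr_diff SM_diff[OF W1] x by blast
  qed
qed

locale bwd =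
  fixes \<sigma> k lam c1 c2 c3 c4 c5 c6 :: real and w :: "real \<Rightarrow> real \<Rightarrow> real"
    and \<tau> \<xi> \<phi> :: "real \<Rightarrow> real \<Rightarrow> real \<Rightarrow> real"
  assumes sp: "\<sigma> > 0" and kp: "k > 0" and lamd: "lam = k\<^sup>2 / (2 * \<sigma>\<^sup>2)"
    and ws: "is_solution \<sigma> k 0 lam w"
    and hT: "\<And>t x u. 0 < x \<Longrightarrow> \<tau> t x u = c1 + c2 * t + c3 * t\<^sup>2"
    and hX: "\<And>t x u. 0 < x \<Longrightarrow> \<xi> t x u = c2 * (1/2 * x * ln x) + c3 * (t * x * ln x) + c4 * x + c5 * (t * x)"
    and hP: "\<And>t x u. 0 < x \<Longrightarrow> \<phi> t x u =
            c2 * ((k / (2 * \<sigma>\<^sup>2) * x * ln x + 1/4 * ln x - \<sigma>\<^sup>2 / 8 * t) * u)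
          + c3 * ((k / \<sigma>\<^sup>2 * t * x * ln x - 1 / (2 * \<sigma>\<^sup>2) * (ln x)\<^sup>2 + 1/2 * t * ln x
                   - \<sigma>\<^sup>2 / 8 * t\<^sup>2 - 1/2 * t) * u)
          + c4 * (k / \<sigma>\<^sup>2 * x * u)
          + c5 * ((k / \<sigma>\<^sup>2 * t * x - 1 / \<sigma>\<^sup>2 * ln x + 1/2 * t) * u)
          + c6 * u
          + w t x"
begin

definition "W = partials (\<lambda>t x u. w t x)"

lemma wsm: "smooth_on dom_pos (\<lambda>t x u. w t x)" using ws unfolding is_solution_def by blast

lemma W1: "h \<in> W \<Longrightarrow> 0 < x \<Longrightarrow> (\<lambda>(t, x, u). h t x u) differentiable (at (t, x, u))"
  using wsm unfolding W_def smooth_on_def dom_pos_def by auto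

lemma W2t: "h \<in> W \<Longrightarrow> pd_t h \<in> W" unfolding W_def by (rule partials.dt)
lemma W2x: "h \<in> W \<Longrightarrow> pd_x h \<in> W" unfolding W_def by (rule partials.dx)
lemma W2u: "h \<in> W \<Longrightarrow> pd_u h \<in> W" unfolding W_def by (rule partials.du)

lemmas smW = smooth_SM[OF W1 W2t W2x W2u]

lemma smT: "smooth_on dom_pos \<tau>"
proof (rule smW)
  show "(\<lambda>t x u. c1 + c2 * t + c3 * (t * t)) \<in> SM W"
    by (intro SM.cst SM.vt SM.vx SM.vu SM.lnx SM.add SM.sub SM.mul)
  show "agr \<tau> (\<lambda>t x u. c1 + c2 * t + c3 * (t * t))"
    unfolding agr_def using hT by (simp add: power2_eq_square)
qed

lemma smX: "smooth_on dom_pos \<xi>"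
proof (rule smW)
  show "(\<lambda>t x u. c2 * (1/2 * x * ln x) + c3 * (t * x * ln x) + c4 * x + c5 * (t * x)) \<in> SM W"
    by (intro SM.cst SM.vt SM.vx SM.vu SM.lnx SM.add SM.sub SM.mul)
  show "agr \<xi> (\<lambda>t x u. c2 * (1/2 * x * ln x) + c3 * (t * x * ln x) + c4 * x + c5 * (t * x))"
    unfolding agr_def using hX by simp
qed

lemma smP: "smooth_on dom_pos \<phi>"
proof (rule smW)
  show "(\<lambda>t x u. c2 * ((k / (2 * \<sigma>\<^sup>2) * x * ln x + 1/4 * ln x - \<sigma>\<^sup>2 / 8 * t) * u)
          + c3 * ((k / \<sigma>\<^sup>2 * t * x * ln x - 1 / (2 * \<sigma>\<^sup>2) * (ln x * ln x) + 1/2 * t * ln x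
                   - \<sigma>\<^sup>2 / 8 * (t * t) - 1/2 * t) * u)
          + c4 * (k / \<sigma>\<^sup>2 * x * u)
          + c5 * ((k / \<sigma>\<^sup>2 * t * x - 1 / \<sigma>\<^sup>2 * ln x + 1/2 * t) * u)
          + c6 * u
          + w t x) \<in> SM W"
    by (intro SM.cst SM.vt SM.vx SM.vu SM.lnx SM.add SM.sub SM.mul SM.base)
       (simp add: W_def partials.self)
  show "agr \<phi> (\<lambda>t x u. c2 * ((k / (2 * \<sigma>\<^sup>2) * x * ln x + 1/4 * ln x - \<sigma>\<^sup>2 / 8 * t) * u)
          + c3 * ((k / \<sigma>\<^sup>2 * t * x * ln x - 1 / (2 * \<sigma>\<^sup>2) * (ln x * ln x) + 1/2 * t * ln x
                   - \<sigma>\<^sup>2 / 8 * (t * t) - 1/2 * t) * u)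
          + c4 * (k / \<sigma>\<^sup>2 * x * u)
          + c5 * ((k / \<sigma>\<^sup>2 * t * x - 1 / \<sigma>\<^sup>2 * ln x + 1/2 * t) * u)
          + c6 * u
          + w t x)"
    unfolding agr_def using hP by (simp add: power2_eq_square)
qed


definition "P t x = c2 * (k / (2 * \<sigma>\<^sup>2) * x * ln x + 1/4 * ln x - \<sigma>\<^sup>2 / 8 * t)
          + c3 * (k / \<sigma>\<^sup>2 * t * x * ln x - 1 / (2 * \<sigma>\<^sup>2) * (ln x)\<^sup>2 + 1/2 * t * ln x
                   - \<sigma>\<^sup>2 / 8 * t\<^sup>2 - 1/2 * t)
          + c4 * (k / \<sigma>\<^sup>2 * x) + c5 * (k / \<sigma>\<^sup>2 * t * x - 1 / \<sigma>\<^sup>2 * ln x + 1/2 * t) + c6"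
definition "Pt t x = c2 * (- \<sigma>\<^sup>2 / 8) + c3 * (k / \<sigma>\<^sup>2 * x * ln x + 1/2 * ln x - \<sigma>\<^sup>2 / 4 * t - 1/2)
          + c5 * (k / \<sigma>\<^sup>2 * x + 1/2)"
definition "Px t x = c2 * (k / (2 * \<sigma>\<^sup>2) * (ln x + 1) + 1 / (4 * x))
          + c3 * (k / \<sigma>\<^sup>2 * t * (ln x + 1) - ln x / (\<sigma>\<^sup>2 * x) + t / (2 * x)) + c4 * k / \<sigma>\<^sup>2
          + c5 * (k / \<sigma>\<^sup>2 * t - 1 / (\<sigma>\<^sup>2 * x))"
definition "Pxx t x = c2 * (k / (2 * \<sigma>\<^sup>2 * x) - 1 / (4 * x\<^sup>2))
          + c3 * (k * t / (\<sigma>\<^sup>2 * x) - (1 - ln x) / (\<sigma>\<^sup>2 * x\<^sup>2) - t / (2 * x\<^sup>2)) + c5 / (\<sigma>\<^sup>2 * x\<^sup>2)"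

lemma hP': assumes "0 < x" shows "\<phi> t x u = P t x * u + w t x"
  using hP[OF assms, of t u] unfolding P_def by (simp add: algebra_simps)

lemma dPt: "((\<lambda>s. P s x) has_real_derivative Pt t x) (at t)"
  unfolding P_def Pt_def using sp
  by (auto intro!: derivative_eq_intros simp: field_simps power2_eq_square)

lemma dPx: "0 < x \<Longrightarrow> ((\<lambda>y. P t y) has_real_derivative Px t x) (at x)"
  unfolding P_def Px_def using sp
  by (auto intro!: derivative_eq_intros simp: field_simps power2_eq_square)

lemma dPxx: "0 < x \<Longrightarrow> ((\<lambda>y. Px t y) has_real_derivative Pxx t x) (at x)"
  unfolding Pxx_def Px_def using sp
  by (auto intro!: derivative_eq_intros simp: field_simps power2_eq_square)

lemma dwt: "0 < x \<Longrightarrow> ((\<lambda>s. w s x) has_real_derivative deriv (\<lambda>s. w s x) t) (at t)"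
  using line_t[OF wsm partials.self, of x t 0] by (simp add: pdt_app)

lemma dwx: "0 < x \<Longrightarrow> ((\<lambda>y. w t y) has_real_derivative deriv (\<lambda>y. w t y) x) (at x)"
  using line_x[OF wsm partials.self, of x t 0] by (simp add: pdx_app)

lemma dwxx: "0 < x \<Longrightarrow> ((\<lambda>y. deriv (\<lambda>z. w t z) y) has_real_derivative deriv (deriv (\<lambda>y. w t y)) x) (at x)"
  using line_x[OF wsm partials.dx[OF partials.self], of x t 0] by (simp add: pdx_app)

context fixes t x u :: real assumes x: "0 < x"
begin

lemma T_t: "pd_t \<tau> t x u = c2 + 2 * c3 * t"
proof -
  have "(\<lambda>s. \<tau> s x u) = (\<lambda>s. c1 + c2 * s + c3 * s\<^sup>2)" using hT[OF x] by blast
  then show ?thesis unfolding pdt_app by (auto intro!: DERIV_imp_deriv derivative_eq_intros)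
qed

lemma T_x0: "pd_x \<tau> t y s = 0" if "0 < y" for y s
proof -
  have "pd_x \<tau> t y s = deriv (\<lambda>z. c1 + c2 * t + c3 * t\<^sup>2) y"
    unfolding pdx_app by (rule deriv_local[OF that]) (rule hT)
  then show ?thesis by simp
qed

lemma T_u0: "pd_u \<tau> t x s = 0" for s
proof -
  have "(\<lambda>z. \<tau> t x z) = (\<lambda>z. c1 + c2 * t + c3 * t\<^sup>2)" using hT[OF x] by blast
  then show ?thesis unfolding pdu_app by simp
qed

lemma T_x: "pd_x \<tau> t x u = 0" by (rule T_x0[OF x])
lemma T_u: "pd_u \<tau> t x u = 0" by (rule T_u0)

lemma T_xx: "pd_x (pd_x \<tau>) t x u = 0"
proof -
  have "pd_x (pd_x \<tau>) t x u = deriv (\<lambda>z. 0) x"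
    unfolding pdx_app[of "pd_x \<tau>"] by (rule deriv_local[OF x]) (rule T_x0)
  then show ?thesis by simp
qed

lemma T_ux: "pd_u (pd_x \<tau>) t x u = 0"
proof -
  have "pd_x \<tau> t x = (\<lambda>s. 0)" by (rule ext) (rule T_x0[OF x])
  then show ?thesis unfolding pdu_app[of "pd_x \<tau>"] by simp
qed

lemma T_uu: "pd_u (pd_u \<tau>) t x u = 0"
proof -
  have "pd_u \<tau> t x = (\<lambda>s. 0)" by (rule ext) (rule T_u0)
  then show ?thesis unfolding pdu_app[of "pd_u \<tau>"] by simp
qed

lemma X_closed: "\<xi> t y s = c2 * (1/2 * y * ln y) + c3 * (t * y * ln y) + c4 * y + c5 * (t * y)"
  if "0 < y" for y s using hX[OF that] .

lemma X_t: "pd_t \<xi> t x u = c3 * (x * ln x) + c5 * x"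
proof -
  have "(\<lambda>s. \<xi> s x u) = (\<lambda>s. c2 * (1/2 * x * ln x) + c3 * (s * x * ln x) + c4 * x + c5 * (s * x))"
    using hX[OF x] by blast
  then show ?thesis unfolding pdt_app by (auto intro!: DERIV_imp_deriv derivative_eq_intros)
qed

lemma X_x0: "pd_x \<xi> t y s = c2 / 2 * (ln y + 1) + c3 * t * (ln y + 1) + c4 + c5 * t" if y: "0 < y" for y s
proof -
  have "pd_x \<xi> t y s = deriv (\<lambda>z. c2 * (1/2 * z * ln z) + c3 * (t * z * ln z) + c4 * z + c5 * (t * z)) y"
    unfolding pdx_app by (rule deriv_local[OF y]) (rule hX)
  also have "\<dots> = c2 / 2 * (ln y + 1) + c3 * t * (ln y + 1) + c4 + c5 * t"
    by (rule DERIV_imp_deriv) (use y in \<open>auto intro!: derivative_eq_intros simp: field_simps\<close>)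
  finally show ?thesis .
qed

lemma X_x: "pd_x \<xi> t x u = c2 / 2 * (ln x + 1) + c3 * t * (ln x + 1) + c4 + c5 * t"
  by (rule X_x0[OF x])

lemma X_xx: "pd_x (pd_x \<xi>) t x u = c2 / (2 * x) + c3 * t / x"
proof -
  have "pd_x (pd_x \<xi>) t x u = deriv (\<lambda>z. c2 / 2 * (ln z + 1) + c3 * t * (ln z + 1) + c4 + c5 * t) x"
    unfolding pdx_app[of "pd_x \<xi>"] by (rule deriv_local[OF x]) (rule X_x0)
  also have "\<dots> = c2 / (2 * x) + c3 * t / x"
    by (rule DERIV_imp_deriv) (use x in \<open>auto intro!: derivative_eq_intros simp: field_simps\<close>)
  finally show ?thesis .
qed

lemma X_u0: "pd_u \<xi> t x s = 0" for s
proof -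
  have "(\<lambda>z. \<xi> t x z) = (\<lambda>z. c2 * (1/2 * x * ln x) + c3 * (t * x * ln x) + c4 * x + c5 * (t * x))"
    using hX[OF x] by blast
  then show ?thesis unfolding pdu_app by simp
qed

lemma X_u: "pd_u \<xi> t x u = 0" by (rule X_u0)
lemma X_uu: "pd_u (pd_u \<xi>) t x u = 0"
proof -
  have "pd_u \<xi> t x = (\<lambda>s. 0)" by (rule ext) (rule X_u0)
  then show ?thesis unfolding pdu_app[of "pd_u \<xi>"] by simp
qed
lemma X_ux: "pd_u (pd_x \<xi>) t x u = 0"
proof -
  have "pd_x \<xi> t x = (\<lambda>s. c2 / 2 * (ln x + 1) + c3 * t * (ln x + 1) + c4 + c5 * t)"
    by (rule ext) (rule X_x0[OF x])
  then show ?thesis unfolding pdu_app[of "pd_x \<xi>"] by simp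
qed

lemma P_t: "pd_t \<phi> t x u = Pt t x * u + deriv (\<lambda>s. w s x) t"
proof -
  have "(\<lambda>s. \<phi> s x u) = (\<lambda>s. P s x * u + w s x)" using hP'[OF x] by blast
  then show ?thesis unfolding pdt_app
    by (auto intro!: DERIV_imp_deriv derivative_eq_intros dPt dwt[OF x])
qed

lemma P_x0: "pd_x \<phi> t y s = Px t y * s + deriv (\<lambda>z. w t z) y" if y: "0 < y" for y s
proof -
  have "pd_x \<phi> t y s = deriv (\<lambda>z. P t z * s + w t z) y"
    unfolding pdx_app by (rule deriv_local[OF y]) (rule hP')
  also have "\<dots> = Px t y * s + deriv (\<lambda>z. w t z) y"
    by (auto intro!: DERIV_imp_deriv derivative_eq_intros dPx[OF y] dwx[OF y])
  finally show ?thesis .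
qed

lemma P_x: "pd_x \<phi> t x u = Px t x * u + deriv (\<lambda>z. w t z) x" by (rule P_x0[OF x])

lemma P_xx: "pd_x (pd_x \<phi>) t x u = Pxx t x * u + deriv (deriv (\<lambda>z. w t z)) x"
proof -
  have "pd_x (pd_x \<phi>) t x u = deriv (\<lambda>y. Px t y * u + deriv (\<lambda>z. w t z) y) x"
    unfolding pdx_app[of "pd_x \<phi>"] by (rule deriv_local[OF x]) (rule P_x0)
  also have "\<dots> = Pxx t x * u + deriv (deriv (\<lambda>z. w t z)) x"
    by (auto intro!: DERIV_imp_deriv derivative_eq_intros dPxx[OF x] dwxx[OF x])
  finally show ?thesis .
qed

lemma P_u0: "pd_u \<phi> t x s = P t x" for s
proof -
  have "(\<lambda>z. \<phi> t x z) = (\<lambda>z. P t x * z + w t x)" using hP'[OF x] by blast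
  then show ?thesis unfolding pdu_app by (auto intro!: DERIV_imp_deriv derivative_eq_intros)
qed

lemma P_u: "pd_u \<phi> t x u = P t x" by (rule P_u0)
lemma P_uu: "pd_u (pd_u \<phi>) t x u = 0"
proof -
  have "pd_u \<phi> t x = (\<lambda>s. P t x)" by (rule ext) (rule P_u0)
  then show ?thesis unfolding pdu_app[of "pd_u \<phi>"] by simp
qed
lemma P_ux: "pd_u (pd_x \<phi>) t x u = Px t x"
proof -
  have "(\<lambda>s. pd_x \<phi> t x s) = (\<lambda>s. Px t x * s + deriv (\<lambda>z. w t z) x)" using P_x0[OF x] by blast
  then show ?thesis unfolding pdu_app[of "pd_x \<phi>"] by (auto intro!: DERIV_imp_deriv derivative_eq_intros)
qed

end


lemma bwd_main: "is_symmetry \<sigma> k 0 lam \<tau> \<xi> \<phi>"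
  unfolding is_symmetry_def
proof (intro conjI allI impI smT smX smP)
  fix t x u ut ux uxx uxt :: real
  assume x: "0 < x" and E: "E_eq \<sigma> k 0 lam x u ut ux uxx = 0"
  have ut: "ut = 1/2 * \<sigma>\<^sup>2 * x\<^sup>2 * uxx + k * x * (0 - x) * ux + lam * x\<^sup>2 * u"
    using E unfolding E_eq_def by simp
  have wpde: "deriv (\<lambda>s. w s x) t = 1/2 * \<sigma>\<^sup>2 * x\<^sup>2 * deriv (deriv (\<lambda>y. w t y)) x
      + k * x * (0 - x) * deriv (\<lambda>y. w t y) x + lam * x\<^sup>2 * w t x"
    using ws x unfolding is_solution_def by blast
  show "\<xi> t x u * (\<sigma>\<^sup>2 * x * uxx + k * (0 - 2 * x) * ux + 2 * lam * x * u)
        + \<phi> t x u * (lam * x\<^sup>2)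
        + prol_x \<tau> \<xi> \<phi> t x u ut ux * (k * x * (0 - x))
        + prol_xx \<tau> \<xi> \<phi> t x u ut ux uxx uxt * (1/2 * \<sigma>\<^sup>2 * x\<^sup>2)
        - prol_t \<tau> \<xi> \<phi> t x u ut ux = 0"
    unfolding prol_t_def prol_x_def prol_xx_def
      T_t[OF x] T_x[OF x] T_u[OF x] T_xx[OF x] T_ux[OF x] T_uu[OF x]
      X_t[OF x] X_x[OF x] X_xx[OF x] X_u[OF x] X_uu[OF x] X_ux[OF x]
      P_t[OF x] P_x[OF x] P_xx[OF x] P_u[OF x] P_uu[OF x] P_ux[OF x]
      hX[OF x] hP'[OF x] ut wpde
    unfolding P_def Pt_def Px_def Pxx_def lamd using sp x
    by (simp add: field_simps power2_eq_square; algebra)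
qed

end

theorem proposition2p1:
  fixes \<sigma> k \<alpha> lam :: real
    and \<tau> \<xi> \<phi> :: "real \<Rightarrow> real \<Rightarrow> real \<Rightarrow> real"
  assumes "\<sigma> > 0" and "k > 0" and "\<alpha> = 0" and "lam = k\<^sup>2 / (2 * \<sigma>\<^sup>2)"
  shows "is_symmetry \<sigma> k \<alpha> lam \<tau> \<xi> \<phi> \<longleftrightarrow>
    (\<exists>c1 c2 c3 c4 c5 c6 :: real. \<exists>w. is_solution \<sigma> k \<alpha> lam w \<and>
      (\<forall>t x u. x > 0 \<longrightarrow>
        \<tau> t x u = c1 + c2 * t + c3 * t\<^sup>2 \<and>
        \<xi> t x u = c2 * (1/2 * x * ln x) + c3 * (t * x * ln x) + c4 * x + c5 * (t * x) \<and>
        \<phi> t x u =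
            c2 * ((k / (2 * \<sigma>\<^sup>2) * x * ln x + 1/4 * ln x - \<sigma>\<^sup>2 / 8 * t) * u)
          + c3 * ((k / \<sigma>\<^sup>2 * t * x * ln x - 1 / (2 * \<sigma>\<^sup>2) * (ln x)\<^sup>2 + 1/2 * t * ln x
                   - \<sigma>\<^sup>2 / 8 * t\<^sup>2 - 1/2 * t) * u)
          + c4 * (k / \<sigma>\<^sup>2 * x * u)
          + c5 * ((k / \<sigma>\<^sup>2 * t * x - 1 / \<sigma>\<^sup>2 * ln x + 1/2 * t) * u)
          + c6 * u
          + w t x))"
proof -
  note a0 = assms(3)
  show ?thesis
  proof
    assume sym: "is_symmetry \<sigma> k \<alpha> lam \<tau> \<xi> \<phi>"
    have sm: "smooth_on dom_pos \<tau>" "smooth_on dom_pos \<xi>" "smooth_on dom_pos \<phi>"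
      using sym unfolding is_symmetry_def by blast+
    have HJ: "jet \<sigma> k 0 lam \<tau> \<xi> \<phi> t x u ux uxx uxt = 0" if x: "0 < x" for t x u ux uxx uxt
    proof -
      let ?ut = "1/2 * \<sigma>\<^sup>2 * x\<^sup>2 * uxx + k * x * (0 - x) * ux + lam * x\<^sup>2 * u"
      have "E_eq \<sigma> k 0 lam x u ?ut ux uxx = 0" unfolding E_eq_def by simp
      then show ?thesis using sym x a0 unfolding is_symmetry_def jet_def Let_def by blast
    qed
    interpret F: fwd \<sigma> k lam \<tau> \<xi> \<phi>
      by unfold_locales (use assms sm HJ in auto)
    show "\<exists>c1 c2 c3 c4 c5 c6 :: real. \<exists>w. is_solution \<sigma> k \<alpha> lam w \<and>
      (\<forall>t x u. x > 0 \<longrightarrow>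
        \<tau> t x u = c1 + c2 * t + c3 * t\<^sup>2 \<and>
        \<xi> t x u = c2 * (1/2 * x * ln x) + c3 * (t * x * ln x) + c4 * x + c5 * (t * x) \<and>
        \<phi> t x u =
            c2 * ((k / (2 * \<sigma>\<^sup>2) * x * ln x + 1/4 * ln x - \<sigma>\<^sup>2 / 8 * t) * u)
          + c3 * ((k / \<sigma>\<^sup>2 * t * x * ln x - 1 / (2 * \<sigma>\<^sup>2) * (ln x)\<^sup>2 + 1/2 * t * ln x
                   - \<sigma>\<^sup>2 / 8 * t\<^sup>2 - 1/2 * t) * u)
          + c4 * (k / \<sigma>\<^sup>2 * x * u)
          + c5 * ((k / \<sigma>\<^sup>2 * t * x - 1 / \<sigma>\<^sup>2 * ln x + 1/2 * t) * u)
          + c6 * u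
          + w t x)"
      using F.fwd_main a0 by simp
  next
    assume "\<exists>c1 c2 c3 c4 c5 c6 :: real. \<exists>w. is_solution \<sigma> k \<alpha> lam w \<and>
      (\<forall>t x u. x > 0 \<longrightarrow>
        \<tau> t x u = c1 + c2 * t + c3 * t\<^sup>2 \<and>
        \<xi> t x u = c2 * (1/2 * x * ln x) + c3 * (t * x * ln x) + c4 * x + c5 * (t * x) \<and>
        \<phi> t x u =
            c2 * ((k / (2 * \<sigma>\<^sup>2) * x * ln x + 1/4 * ln x - \<sigma>\<^sup>2 / 8 * t) * u)
          + c3 * ((k / \<sigma>\<^sup>2 * t * x * ln x - 1 / (2 * \<sigma>\<^sup>2) * (ln x)\<^sup>2 + 1/2 * t * ln x
                   - \<sigma>\<^sup>2 / 8 * t\<^sup>2 - 1/2 * t) * u)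
          + c4 * (k / \<sigma>\<^sup>2 * x * u)
          + c5 * ((k / \<sigma>\<^sup>2 * t * x - 1 / \<sigma>\<^sup>2 * ln x + 1/2 * t) * u)
          + c6 * u
          + w t x)"
    then obtain c1 c2 c3 c4 c5 c6 w where ws: "is_solution \<sigma> k \<alpha> lam w" and
      h: "\<forall>t x u. x > 0 \<longrightarrow>
        \<tau> t x u = c1 + c2 * t + c3 * t\<^sup>2 \<and>
        \<xi> t x u = c2 * (1/2 * x * ln x) + c3 * (t * x * ln x) + c4 * x + c5 * (t * x) \<and>
        \<phi> t x u =
            c2 * ((k / (2 * \<sigma>\<^sup>2) * x * ln x + 1/4 * ln x - \<sigma>\<^sup>2 / 8 * t) * u)
          + c3 * ((k / \<sigma>\<^sup>2 * t * x * ln x - 1 / (2 * \<sigma>\<^sup>2) * (ln x)\<^sup>2 + 1/2 * t * ln x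
                   - \<sigma>\<^sup>2 / 8 * t\<^sup>2 - 1/2 * t) * u)
          + c4 * (k / \<sigma>\<^sup>2 * x * u)
          + c5 * ((k / \<sigma>\<^sup>2 * t * x - 1 / \<sigma>\<^sup>2 * ln x + 1/2 * t) * u)
          + c6 * u
          + w t x"
      by blast
    interpret B: bwd \<sigma> k lam c1 c2 c3 c4 c5 c6 w \<tau> \<xi> \<phi>
      by unfold_locales (use assms ws h a0 in auto)
    show "is_symmetry \<sigma> k \<alpha> lam \<tau> \<xi> \<phi>" using B.bwd_main a0 by simp
  qed
qed

end
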